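(* Let $n$ be a positive integer such that every component of $2n+1$ is greater than $34$. Let $G$ be any one of the groups $C_3\rtimes C_8=\langle a,b\mid a^8=b^3=1,\ ab^{-1}=ba\rangle$, $SL(2,3)$, or $\mathbb{Z}_3\times D_8$. Then there exists a $(48n+24,[34^n,4^{2n},2^{3n},24],24)$ partitioned difference family in $G\times\mathbb{F}_{2n+1}$.
   Context: The components of an integer $m$ are its maximal prime power factors, and $\mathbb{F}_m$ denotes the ring which is the direct product of the finite fields whose orders are the components of $m$; in $G\times\mathbb{F}_{2n+1}$ the second factor is taken with its additive group. For a finite group $\Gamma$ and $B\subseteq\Gamma$, $\Delta B$ is the multiset of differences $xy^{-1}$ (or $x-y$ additively) over ordered pairs of distinct $x,y\in B$; for $\mathcal{F}=\{B_1,\dots,B_t\}$, $\Delta\mathcal{F}$ is the multiset union of the $\Delta B_i$. A $(v,[k_1,\dots,k_t],\lambda)$ partitioned difference family in $\Gamma$ ($|\Gamma|=v$) is a partition of $\Gamma$ into blocks $B_i$ with $|B_i|=k_i$ such that $\Delta\mathcal{F}$ contains every non-identity element exactly $\lambda$ times. Exponents denote multiplicities of block sizes. $D_{8}=\langle x,y\mid x^4=1,\ y^2=1,\ yx^i=x^{-i}y\rangle$ is the dihedral group of order $8$; $SL(2,3)$ is the group of $2\times2$ matrices over $\mathbb{Z}_3$ of determinant $1$. *)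

theory Defs
  imports "HOL-Analysis.Analysis" "HOL-Library.Numeral_Type" "HOL-Algebra.Algebra"
    "HOL-Computational_Algebra.Primes"
begin

definition components :: "nat \<Rightarrow> nat set" where
  "components m = {p ^ multiplicity p m | p. p \<in> prime_factors m}"

text \<open>Additive group of the ring F_m = product of the finite fields whose orders are the
  components of m; the fields are given as a family Fld indexed by the components.\<close>
definition addF :: "nat \<Rightarrow> (nat \<Rightarrow> 'b ring) \<Rightarrow> (nat \<Rightarrow> 'b) monoid" where
  "addF m Fld = product_group (components m) (\<lambda>q. add_monoid (Fld q))"

definition is_field_family :: "nat \<Rightarrow> (nat \<Rightarrow> 'b ring) \<Rightarrow> bool" where
  "is_field_family m Fld \<longleftrightarrow> (\<forall>q \<in> components m.
     field (Fld q) \<and> finite (carrier (Fld q)) \<and> card (carrier (Fld q)) = q)"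

definition is_PDF :: "('a, 'm) monoid_scheme \<Rightarrow> nat \<Rightarrow> nat list \<Rightarrow> nat \<Rightarrow> 'a set list \<Rightarrow> bool" where
  "is_PDF Gam v ks lam Bs \<longleftrightarrow>
     card (carrier Gam) = v \<and>
     (\<forall>B \<in> set Bs. B \<subseteq> carrier Gam \<and> B \<noteq> {}) \<and>
     (\<forall>i < length Bs. \<forall>j < length Bs. i \<noteq> j \<longrightarrow> Bs ! i \<inter> Bs ! j = {}) \<and>
     \<Union> (set Bs) = carrier Gam \<and>
     mset (map card Bs) = mset ks \<and>
     (\<forall>g \<in> carrier Gam. g \<noteq> \<one>\<^bsub>Gam\<^esub> \<longrightarrow>
        sum_list (map (\<lambda>B. card {(x, y). x \<in> B \<and> y \<in> B \<and> x \<noteq> y \<and>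
                                   x \<otimes>\<^bsub>Gam\<^esub> inv\<^bsub>Gam\<^esub> y = g}) Bs) = lam)"

definition has_PDF :: "('a, 'm) monoid_scheme \<Rightarrow> nat \<Rightarrow> nat list \<Rightarrow> nat \<Rightarrow> bool" where
  "has_PDF Gam v ks lam \<longleftrightarrow> (\<exists>Bs. is_PDF Gam v ks lam Bs)"

text \<open>C3 \<rtimes> C8 = <a,b | a^8 = b^3 = 1, a b^-1 = b a>; the pair (i,j) stands for a^i b^j.
  Since a b a^-1 = b^-1, (a^i b^j)(a^k b^l) = a^(i+k) b^((-1)^k j + l).\<close>
definition C3_rtimes_C8 :: "(nat \<times> nat) monoid" where
  "C3_rtimes_C8 = \<lparr> carrier = {0..<8} \<times> {0..<3},
     mult = (\<lambda>(i, j) (k, l). ((i + k) mod 8, (if even k then j + l else 2 * j + l) mod 3)),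
     one = (0, 0) \<rparr>"

definition SL23 :: "(3 ^ 2 ^ 2) monoid" where
  "SL23 = \<lparr> carrier = {A. det A = 1}, mult = (\<lambda>A B. A ** B), one = mat 1 \<rparr>"

text \<open>D8 = <x,y | x^4 = 1, y^2 = 1, y x^i = x^-i y>; (i,j) stands for x^i y^j, so
  (x^i y^j)(x^k y^l) = x^(i + (-1)^j k) y^(j+l).\<close>
definition D8 :: "(nat \<times> nat) monoid" where
  "D8 = \<lparr> carrier = {0..<4} \<times> {0..<2},
     mult = (\<lambda>(i, j) (k, l). ((if even j then i + k else i + 3 * k) mod 4, (j + l) mod 2)),
     one = (0, 0) \<rparr>"

definition Z3_times_D8 :: "(int \<times> (nat \<times> nat)) monoid" where
  "Z3_times_D8 = integer_mod_group 3 \<times>\<times> D8"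

definition blocksizes :: "nat \<Rightarrow> nat list" where
  "blocksizes n = replicate n 34 @ replicate (2 * n) 4 @ replicate (3 * n) 2 @ [24]"

end

theory Submission
  imports Defs
begin

lemma (in group) odd_no_invol:
  assumes "odd (card (carrier G))"
    and "z \<in> carrier G" "z \<otimes> z = \<one>"
  shows "z = \<one>"
proof -
  obtain k where k: "order G = 2*k+1" using assms(1) unfolding order_def by (metis oddE)
  have "z [^] (2*k+1) = \<one>" using pow_order_eq_1[OF assms(2)] k by simp
  moreover have "z [^] (2*k+1) = z"
  proof -
    have "z [^] (2*k) = \<one>" using assms(2,3)
      by (metis nat_pow_pow nat_pow_one numeral_2_eq_2 nat_pow_0 nat_pow_Suc l_one one_closed)
    then show ?thesis using assms(2) by (simp add: nat_pow_Suc)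
  qed
  ultimately show ?thesis by simp
qed

lemma (in group) odd_no_invol':
  assumes "odd (card (carrier G))"
    and "z \<in> carrier G" "inv z = z"
  shows "z = \<one>"
proof -
  have "z \<otimes> z = \<one>" using assms(2,3) by (metis r_inv)
  then show ?thesis using odd_no_invol assms by blast
qed

lemma (in group) half_system:
  assumes "finite (carrier G)" "odd (card (carrier G))"
  shows "\<exists>S. S \<subseteq> carrier G - {\<one>} \<and> (\<forall>z\<in>S. inv z \<notin> S)
     \<and> (\<forall>z\<in>carrier G - {\<one>}. z \<in> S \<or> inv z \<in> S)
     \<and> 2 * card S + 1 = card (carrier G)"
proof -
  define T where "T = carrier G - {\<one>}"
  define rep where "rep z = (SOME y. y \<in> {z, inv z})" for z
  define S where "S = {z\<in>T. rep z = z}"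
  have rep_in: "rep z \<in> {z, inv z}" for z unfolding rep_def by (rule someI[of _ z]) simp
  have rep_inv: "rep (inv z) = rep z" if "z \<in> carrier G" for z
    unfolding rep_def using that by (simp add: insert_commute)
  have ninv: "inv z \<noteq> z" if "z \<in> T" for z
    using odd_no_invol'[OF assms(2), of z] that unfolding T_def by auto
  have invT: "inv z \<in> T" if "z \<in> T" for z using that unfolding T_def by auto
  have S1: "\<forall>z\<in>S. inv z \<notin> S"
  proof
    fix z assume z: "z \<in> S"
    hence zT: "z \<in> T" and rz: "rep z = z" unfolding S_def by auto
    show "inv z \<notin> S"
    proof
      assume "inv z \<in> S"
      hence "rep (inv z) = inv z" unfolding S_def by auto
      thus False using rep_inv[of z] rz ninv[OF zT] zT unfolding T_def by auto
    qed
  qed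
  have S2: "\<forall>z\<in>T. z \<in> S \<or> inv z \<in> S"
  proof
    fix z assume zT: "z \<in> T"
    hence zc: "z \<in> carrier G" unfolding T_def by auto
    show "z \<in> S \<or> inv z \<in> S"
    proof (cases "rep z = z")
      case True thus ?thesis using zT unfolding S_def by auto
    next
      case False
      hence "rep z = inv z" using rep_in[of z] by auto
      hence "rep (inv z) = inv z" using rep_inv[OF zc] by simp
      thus ?thesis using invT[OF zT] unfolding S_def by auto
    qed
  qed
  have finT: "finite T" using assms(1) unfolding T_def by auto
  have ST: "S \<subseteq> T" unfolding S_def by auto
  have TU: "T = S \<union> m_inv G ` S"
  proof
    show "T \<subseteq> S \<union> m_inv G ` S"
    proof
      fix z assume zT: "z \<in> T"
      hence zc: "z \<in> carrier G" unfolding T_def by auto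
      show "z \<in> S \<union> m_inv G ` S"
      proof (cases "z \<in> S")
        case False
        hence "inv z \<in> S" using S2 zT by auto
        moreover have "z = inv (inv z)" using zc by simp
        ultimately show ?thesis by blast
      qed simp
    qed
    show "S \<union> m_inv G ` S \<subseteq> T" using ST invT by auto
  qed
  have disj: "S \<inter> m_inv G ` S = {}" using S1 ST unfolding T_def
    by auto
  have injS: "inj_on (m_inv G) S" using ST unfolding T_def by (intro inj_onI) (metis DiffD1 inv_inv subsetD)
  have "card T = card S + card (m_inv G ` S)"
    using TU disj finT ST by (metis card_Un_disjoint finite_Un)
  also have "card (m_inv G ` S) = card S" using injS by (simp add: card_image)
  finally have "card T = 2 * card S" by simp
  moreover have "card T + 1 = card (carrier G)" unfolding T_def using assms(1)
    by (simp add: card_Diff_singleton_if) (metis Suc_pred card_gt_0_iff empty_iff one_closed)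
  ultimately show ?thesis using S1 S2 ST unfolding T_def by auto
qed

lemma fiber_sum:
  fixes Gam :: "('a,'m) monoid_scheme" and kap :: "'a \<Rightarrow> 'k"
  assumes grp: "group Gam" and fin: "finite (carrier Gam)" and dks: "distinct ks"
    and kin: "\<forall>q\<in>carrier Gam. kap q \<in> set ks"
    and g: "g \<in> carrier Gam" "g \<noteq> \<one>\<^bsub>Gam\<^esub>"
  shows "sum_list (map (\<lambda>B. card {(x, y). x \<in> B \<and> y \<in> B \<and> x \<noteq> y \<and>
                                   x \<otimes>\<^bsub>Gam\<^esub> inv\<^bsub>Gam\<^esub> y = g})
            (map (\<lambda>k. {q\<in>carrier Gam. kap q = k}) ks))
        = card {q\<in>carrier Gam. kap (g \<otimes>\<^bsub>Gam\<^esub> q) = kap q}"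
proof -
  interpret group Gam by fact
  have step1: "card {(x, y). x \<in> B \<and> y \<in> B \<and> x \<noteq> y \<and> x \<otimes>\<^bsub>Gam\<^esub> inv\<^bsub>Gam\<^esub> y = g}
      = card {y\<in>B. g \<otimes>\<^bsub>Gam\<^esub> y \<in> B}" if B: "B \<subseteq> carrier Gam" for B
  proof -
    have eq: "{(x, y). x \<in> B \<and> y \<in> B \<and> x \<noteq> y \<and> x \<otimes>\<^bsub>Gam\<^esub> inv\<^bsub>Gam\<^esub> y = g}
       = (\<lambda>y. (g \<otimes>\<^bsub>Gam\<^esub> y, y)) ` {y\<in>B. g \<otimes>\<^bsub>Gam\<^esub> y \<in> B}"
    proof (rule Set.set_eqI, rule iffI)
      fix p assume "p \<in> {(x, y). x \<in> B \<and> y \<in> B \<and> x \<noteq> y \<and> x \<otimes>\<^bsub>Gam\<^esub> inv\<^bsub>Gam\<^esub> y = g}"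
      then obtain x y where p: "p = (x,y)" "x \<in> B" "y \<in> B" "x \<otimes>\<^bsub>Gam\<^esub> inv\<^bsub>Gam\<^esub> y = g" by auto
      have xy: "x \<in> carrier Gam" "y \<in> carrier Gam" using p B by auto
      have "g \<otimes>\<^bsub>Gam\<^esub> y = x" using p(4) xy by (metis inv_solve_right m_closed inv_closed)
      thus "p \<in> (\<lambda>y. (g \<otimes>\<^bsub>Gam\<^esub> y, y)) ` {y\<in>B. g \<otimes>\<^bsub>Gam\<^esub> y \<in> B}" using p by auto
    next
      fix p assume "p \<in> (\<lambda>y. (g \<otimes>\<^bsub>Gam\<^esub> y, y)) ` {y\<in>B. g \<otimes>\<^bsub>Gam\<^esub> y \<in> B}"
      then obtain y where p: "p = (g \<otimes>\<^bsub>Gam\<^esub> y, y)" "y \<in> B" "g \<otimes>\<^bsub>Gam\<^esub> y \<in> B" by auto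
      have y: "y \<in> carrier Gam" using p B by auto
      have "g \<otimes>\<^bsub>Gam\<^esub> y \<noteq> y" using g y by (metis l_one r_cancel one_closed)
      moreover have "(g \<otimes>\<^bsub>Gam\<^esub> y) \<otimes>\<^bsub>Gam\<^esub> inv\<^bsub>Gam\<^esub> y = g" using g y
        by (simp add: m_assoc)
      ultimately show "p \<in> {(x, y). x \<in> B \<and> y \<in> B \<and> x \<noteq> y \<and> x \<otimes>\<^bsub>Gam\<^esub> inv\<^bsub>Gam\<^esub> y = g}"
        using p by auto
    qed
    show ?thesis unfolding eq by (rule card_image) (auto intro: inj_onI)
  qed
  have "sum_list (map (\<lambda>B. card {(x, y). x \<in> B \<and> y \<in> B \<and> x \<noteq> y \<and>
                                   x \<otimes>\<^bsub>Gam\<^esub> inv\<^bsub>Gam\<^esub> y = g})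
            (map (\<lambda>k. {q\<in>carrier Gam. kap q = k}) ks))
     = sum_list (map (\<lambda>k. card {q\<in>carrier Gam. kap q = k \<and> kap (g \<otimes>\<^bsub>Gam\<^esub> q) = k}) ks)"
  proof -
    have "card {(x, y). x \<in> B \<and> y \<in> B \<and> x \<noteq> y \<and> x \<otimes>\<^bsub>Gam\<^esub> inv\<^bsub>Gam\<^esub> y = g}
          = card {q\<in>carrier Gam. kap q = k \<and> kap (g \<otimes>\<^bsub>Gam\<^esub> q) = k}"
      if "B = {q\<in>carrier Gam. kap q = k}" for B k
      using step1[of B] that g(1) by (auto intro!: arg_cong[where f=card])
    thus ?thesis by (simp add: comp_def)
  qed
  also have "\<dots> = (\<Sum>k\<in>set ks. card {q\<in>carrier Gam. kap q = k \<and> kap (g \<otimes>\<^bsub>Gam\<^esub> q) = k})"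
    by (simp add: sum_list_distinct_conv_sum_set[OF dks])
  also have "\<dots> = card (\<Union>k\<in>set ks. {q\<in>carrier Gam. kap q = k \<and> kap (g \<otimes>\<^bsub>Gam\<^esub> q) = k})"
    by (rule card_UN_disjoint[symmetric]) (use fin in auto)
  also have "(\<Union>k\<in>set ks. {q\<in>carrier Gam. kap q = k \<and> kap (g \<otimes>\<^bsub>Gam\<^esub> q) = k})
      = {q\<in>carrier Gam. kap (g \<otimes>\<^bsub>Gam\<^esub> q) = kap q}"
    using kin by auto
  finally show ?thesis .
qed

lemma mset_blocksizes:
  "mset (24 # replicate n 34 @ replicate n 4 @ replicate n 4 @ replicate n 2 @ replicate n 2 @ replicate n 2)
   = mset (blocksizes n)"
proof -
  have "replicate (2*n) (4::nat) = replicate n 4 @ replicate n 4"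
    by (simp only: mult_2 replicate_add)
  moreover have "replicate (3*n) (2::nat) = replicate n 2 @ replicate n 2 @ replicate n 2"
  proof -
    have "3*n = n + (n + n)" by simp
    thus ?thesis by (simp only: replicate_add)
  qed
  ultimately show ?thesis unfolding blocksizes_def by (simp add: ac_simps)
qed

lemma (in group) inj_hom_kernel:
  assumes "\<forall>x\<in>carrier G. D x \<in> carrier G"
    and "\<forall>x\<in>carrier G. \<forall>y\<in>carrier G. D (x \<otimes> y) = D x \<otimes> D y"
    and "\<forall>z\<in>carrier G. D z = \<one> \<longrightarrow> z = \<one>"
  shows "inj_on D (carrier G)"
proof (rule inj_onI)
  fix x y assume xy: "x \<in> carrier G" "y \<in> carrier G" "D x = D y"
  have D1: "D \<one> = \<one>" using assms(1,2) by (metis l_one one_closed r_cancel_one')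
  have Dinv: "D (inv y) = inv (D y)" using assms(1,2) xy(2) D1
    by (metis inv_closed inv_equality l_inv)
  have "D (x \<otimes> inv y) = \<one>" using assms xy Dinv by simp
  hence "x \<otimes> inv y = \<one>" using assms(3) xy by simp
  thus "x = y" using xy by (metis inv_equality inv_inv inv_closed)
qed

lemma (in group) unique_sol:
  assumes fin: "finite (carrier G)" and Din: "\<forall>x\<in>carrier G. D x \<in> carrier G"
    and inj: "inj_on D (carrier G)" and D1: "D \<one> = \<one>"
    and f: "f \<in> carrier G" "f \<noteq> \<one>"
  shows "card {z\<in>carrier G. z \<noteq> \<one> \<and> D z = f} = 1"
proof -
  have "D ` carrier G = carrier G" using endo_inj_surj[OF fin _ inj] Din by auto
  then obtain z0 where z0: "z0 \<in> carrier G" "D z0 = f" using f by (metis imageE)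
  have "{z\<in>carrier G. z \<noteq> \<one> \<and> D z = f} = {z0}"
    using z0 inj D1 f unfolding inj_on_def by auto
  thus ?thesis by simp
qed

lemma gen_PDF:
  fixes G :: "('a,'m) monoid_scheme" and A :: "('c,'n) monoid_scheme"
    and blk :: "'a \<Rightarrow> nat" and phi :: "'a \<Rightarrow> 'c \<Rightarrow> 'c"
  assumes grG: "group G" and finG: "finite (carrier G)" and cG: "card (carrier G) = 24"
    and grA: "comm_group A" and finA: "finite (carrier A)" and cA: "card (carrier A) = 2*n+1"
    and blk6: "\<forall>a\<in>carrier G. blk a < 6"
    and blkc: "\<forall>b<6. card {a\<in>carrier G. blk a = b} = [17,2,2,1,1,1]!b"
    and phiA: "\<forall>a\<in>carrier G. \<forall>z\<in>carrier A. phi a z \<in> carrier A"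
    and phihom: "\<forall>a\<in>carrier G. \<forall>x\<in>carrier A. \<forall>y\<in>carrier A.
                    phi a (x \<otimes>\<^bsub>A\<^esub> y) = phi a x \<otimes>\<^bsub>A\<^esub> phi a y"
    and phiinj: "\<forall>a\<in>carrier G. inj_on (phi a) (carrier A)"
    and dif: "\<forall>a\<in>carrier G. \<forall>a'\<in>carrier G. a \<noteq> a' \<longrightarrow> blk a = blk a' \<longrightarrow>
                (\<forall>z\<in>carrier A. phi a' z = phi a z \<longrightarrow> z = \<one>\<^bsub>A\<^esub>)"
    and sm: "\<forall>a\<in>carrier G. \<forall>a'\<in>carrier G. blk a = blk a' \<longrightarrow>
                (\<forall>z\<in>carrier A. phi a' z = inv\<^bsub>A\<^esub> (phi a z) \<longrightarrow> z = \<one>\<^bsub>A\<^esub>)"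
    and twelve: "\<forall>g\<in>carrier G. g \<noteq> \<one>\<^bsub>G\<^esub> \<longrightarrow>
                   card {a\<in>carrier G. blk (g \<otimes>\<^bsub>G\<^esub> a) = blk a} = 12"
  shows "has_PDF (G \<times>\<times> A) (48*n+24) (blocksizes n) 24"
proof -
  interpret G: group G by fact
  interpret A: comm_group A by fact
  define Gam where "Gam = G \<times>\<times> A"
  have grGam: "group Gam" unfolding Gam_def by (rule DirProd_group) (fact, rule A.is_group)
  have cGam: "carrier Gam = carrier G \<times> carrier A" unfolding Gam_def by simp
  have finGam: "finite (carrier Gam)" using finG finA cGam by simp
  define T where "T = carrier A - {\<one>\<^bsub>A\<^esub>}"
  have oddA: "odd (card (carrier A))" using cA by simp
  obtain S where S0: "S \<subseteq> T" and S1: "\<forall>z\<in>S. inv\<^bsub>A\<^esub> z \<notin> S"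
      and S2: "\<forall>z\<in>T. z \<in> S \<or> inv\<^bsub>A\<^esub> z \<in> S" and S3: "2 * card S + 1 = card (carrier A)"
    using A.half_system[OF finA oddA] unfolding T_def by blast
  have cS: "card S = n" using S3 cA by simp
  define rep where "rep z = (if z \<in> S then z else inv\<^bsub>A\<^esub> z)" for z
  have Tc: "z \<in> carrier A" "z \<noteq> \<one>\<^bsub>A\<^esub>" if "z \<in> T" for z using that unfolding T_def by auto
  have invT: "inv\<^bsub>A\<^esub> z \<in> T" if "z \<in> T" for z using that unfolding T_def by auto
  have ninv: "inv\<^bsub>A\<^esub> z \<noteq> z" if "z \<in> T" for z
    using A.odd_no_invol'[OF oddA, of z] that unfolding T_def by auto
  have repS: "rep z \<in> S" if "z \<in> T" for z using S2 that unfolding rep_def by auto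
  have rep_inv: "rep (inv\<^bsub>A\<^esub> z) = rep z" if "z \<in> T" for z
    using S1 S2 that Tc[OF that] unfolding rep_def by auto
  have rep_eq: "rep u = rep v \<longleftrightarrow> u = v \<or> u = inv\<^bsub>A\<^esub> v" if "u \<in> T" "v \<in> T" for u v
  proof
    assume "u = v \<or> u = inv\<^bsub>A\<^esub> v" thus "rep u = rep v" using rep_inv that by auto
  next
    assume h: "rep u = rep v"
    have u: "u \<in> carrier A" and v: "v \<in> carrier A" using Tc that by auto
    show "u = v \<or> u = inv\<^bsub>A\<^esub> v"
      using h u v unfolding rep_def by (auto split: if_splits)
  qed
  have repx: "rep x = x" if "x \<in> S" for x using that unfolding rep_def by simp
  have phi1: "phi a \<one>\<^bsub>A\<^esub> = \<one>\<^bsub>A\<^esub>" if a: "a \<in> carrier G" for a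
  proof -
    have c: "phi a \<one>\<^bsub>A\<^esub> \<in> carrier A" using phiA a by simp
    have "phi a \<one>\<^bsub>A\<^esub> \<otimes>\<^bsub>A\<^esub> phi a \<one>\<^bsub>A\<^esub> = phi a \<one>\<^bsub>A\<^esub> \<otimes>\<^bsub>A\<^esub> \<one>\<^bsub>A\<^esub>"
      using phihom[rule_format, OF a A.one_closed A.one_closed] c by simp
    thus ?thesis using A.l_cancel[of _ _ "phi a \<one>\<^bsub>A\<^esub>"] c by simp
  qed
  have phiinv: "phi a (inv\<^bsub>A\<^esub> z) = inv\<^bsub>A\<^esub> (phi a z)" if a: "a \<in> carrier G" and z: "z \<in> carrier A" for a z
  proof -
    have "phi a (inv\<^bsub>A\<^esub> z) \<otimes>\<^bsub>A\<^esub> phi a z = \<one>\<^bsub>A\<^esub>"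
      using phihom[rule_format, OF a A.inv_closed[OF z] z] phi1[OF a] z by simp
    thus ?thesis using A.inv_equality phiA a z by simp
  qed
  have phi_one_iff: "phi a z = \<one>\<^bsub>A\<^esub> \<longleftrightarrow> z = \<one>\<^bsub>A\<^esub>" if a: "a \<in> carrier G" and z: "z \<in> carrier A" for a z
  proof
    assume "phi a z = \<one>\<^bsub>A\<^esub>"
    hence "phi a z = phi a \<one>\<^bsub>A\<^esub>" using phi1[OF a] by simp
    thus "z = \<one>\<^bsub>A\<^esub>" using phiinj a z A.one_closed unfolding inj_on_def by blast
  qed (use phi1[OF a] in simp)
  have phisurj: "phi a ` carrier A = carrier A" if a: "a \<in> carrier G" for a
    using endo_inj_surj[OF finA _ phiinj[rule_format, OF a]] phiA a by auto
  define psi where "psi a = inv_into (carrier A) (phi a)" for a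
  have psiA: "psi a f \<in> carrier A" if "a \<in> carrier G" "f \<in> carrier A" for a f
  proof -
    have "f \<in> phi a ` carrier A" using phisurj[OF that(1)] that(2) by simp
    thus ?thesis unfolding psi_def by (rule inv_into_into)
  qed
  have phipsi: "phi a (psi a f) = f" if "a \<in> carrier G" "f \<in> carrier A" for a f
  proof -
    have "f \<in> phi a ` carrier A" using phisurj[OF that(1)] that(2) by simp
    thus ?thesis unfolding psi_def by (rule f_inv_into_f)
  qed
  have psiphi: "psi a (phi a z) = z" if "a \<in> carrier G" "z \<in> carrier A" for a z
    unfolding psi_def using phiinj that by (intro inv_into_f_f) auto
  have psiT: "psi a f \<in> T" if a: "a \<in> carrier G" and f: "f \<in> T" for a f
  proof -
    have fc: "f \<in> carrier A" "f \<noteq> \<one>\<^bsub>A\<^esub>" using Tc[OF f] by auto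
    have "psi a f \<noteq> \<one>\<^bsub>A\<^esub>"
    proof
      assume "psi a f = \<one>\<^bsub>A\<^esub>"
      hence "phi a (psi a f) = \<one>\<^bsub>A\<^esub>" using phi1[OF a] by simp
      thus False using phipsi[OF a fc(1)] fc(2) by simp
    qed
    thus ?thesis using psiA[OF a fc(1)] unfolding T_def by simp
  qed
  have phiT: "phi a z \<in> T" if "a \<in> carrier G" "z \<in> T" for a z
  proof -
    have z: "z \<in> carrier A" "z \<noteq> \<one>\<^bsub>A\<^esub>" using Tc[OF that(2)] by auto
    have "phi a z \<noteq> \<one>\<^bsub>A\<^esub>" using phi_one_iff[OF that(1) z(1)] z(2) by simp
    thus ?thesis using phiA that(1) z(1) unfolding T_def by simp
  qed
  have psi_eq: "psi a f = z \<longleftrightarrow> f = phi a z" if "a \<in> carrier G" "f \<in> carrier A" "z \<in> carrier A" for a f z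
  proof
    assume "psi a f = z" thus "f = phi a z" using phipsi[OF that(1,2)] by simp
  next
    assume "f = phi a z" thus "psi a f = z" using psiphi[OF that(1,3)] by simp
  qed
  define kap where "kap q = (if snd q = \<one>\<^bsub>A\<^esub> then None else Some (blk (fst q), rep (psi (fst q) (snd q))))" for q
  obtain xs where xs: "set xs = S" "distinct xs" using finite_distinct_list finA S0
    by (metis T_def finite_Diff finite_subset)
  have lxs: "length xs = n" using xs cS distinct_card by metis
  define ks where "ks = None # map Some (List.product [0,1,2,3,4,5::nat] xs)"
  have dks: "distinct ks"
  proof -
    have "distinct (List.product [0,1,2,3,4,5::nat] xs)"
      by (rule distinct_product) (simp_all add: xs(2))
    thus ?thesis unfolding ks_def by (simp add: distinct_map del: product.simps)
  qed
  have setks: "set ks = insert None (Some ` ({0..<6} \<times> S))"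
    unfolding ks_def using xs(1) by (auto simp del: product.simps)
  have kin: "\<forall>q\<in>carrier Gam. kap q \<in> set ks"
  proof
    fix q assume q: "q \<in> carrier Gam"
    obtain a f where qa: "q = (a,f)" "a \<in> carrier G" "f \<in> carrier A" using q cGam by auto
    show "kap q \<in> set ks"
    proof (cases "f = \<one>\<^bsub>A\<^esub>")
      case True thus ?thesis unfolding kap_def setks qa by simp
    next
      case False
      hence "f \<in> T" using qa unfolding T_def by auto
      hence "rep (psi a f) \<in> S" using psiT repS qa by auto
      thus ?thesis using False blk6 qa unfolding kap_def setks by auto
    qed
  qed
  define fib where "fib k = {q\<in>carrier Gam. kap q = k}" for k
  define Bs where "Bs = map fib ks"
  have cNone: "card (fib None) = 24"
  proof -
    have "fib None = carrier G \<times> {\<one>\<^bsub>A\<^esub>}" unfolding fib_def kap_def cGam by auto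
    thus ?thesis using cG by (simp add: card_cartesian_product)
  qed
  have cSome: "card (fib (Some (b,x))) = 2 * ([17,2,2,1,1,1]!b)" if b: "b < 6" and x: "x \<in> S" for b x
  proof -
    have xT: "x \<in> T" using x S0 by auto
    have "fib (Some (b,x)) = Sigma {a\<in>carrier G. blk a = b} (\<lambda>a. phi a ` {x, inv\<^bsub>A\<^esub> x})"
    proof (rule Set.set_eqI)
      fix q
      show "q \<in> fib (Some (b,x)) \<longleftrightarrow> q \<in> Sigma {a\<in>carrier G. blk a = b} (\<lambda>a. phi a ` {x, inv\<^bsub>A\<^esub> x})"
      proof (cases q)
        case (Pair a f)
        have xA: "x \<in> carrier A" "inv\<^bsub>A\<^esub> x \<in> carrier A" using Tc[OF xT] by auto
        have R: "q \<in> Sigma {a\<in>carrier G. blk a = b} (\<lambda>a. phi a ` {x, inv\<^bsub>A\<^esub> x})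
             \<longleftrightarrow> a \<in> carrier G \<and> blk a = b \<and> (f = phi a x \<or> f = phi a (inv\<^bsub>A\<^esub> x))"
          unfolding Pair by auto
        have L: "q \<in> fib (Some (b,x)) \<longleftrightarrow> a \<in> carrier G \<and> f \<in> carrier A \<and> kap (a,f) = Some (b,x)"
          unfolding Pair fib_def cGam by simp
        show ?thesis
        proof (cases "a \<in> carrier G \<and> f \<in> carrier A \<and> f \<noteq> \<one>\<^bsub>A\<^esub>")
          case True
          hence fT: "f \<in> T" unfolding T_def by auto
          have pT: "psi a f \<in> T" using psiT True fT by auto
          have k: "kap (a,f) = Some (blk a, rep (psi a f))" unfolding kap_def using True by simp
          have "rep (psi a f) = x \<longleftrightarrow> psi a f = x \<or> psi a f = inv\<^bsub>A\<^esub> x"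
            using rep_eq[OF pT xT] repx[OF x] by simp
          also have "\<dots> \<longleftrightarrow> f = phi a x \<or> f = phi a (inv\<^bsub>A\<^esub> x)"
            using psi_eq[of a f] True xA by simp
          finally show ?thesis unfolding L R k using True by auto
        next
          case False
          have "\<not> (a \<in> carrier G \<and> f \<in> carrier A \<and> kap (a,f) = Some (b,x))"
            using False unfolding kap_def by auto
          moreover have "\<not> (a \<in> carrier G \<and> blk a = b \<and> (f = phi a x \<or> f = phi a (inv\<^bsub>A\<^esub> x)))"
          proof
            assume h: "a \<in> carrier G \<and> blk a = b \<and> (f = phi a x \<or> f = phi a (inv\<^bsub>A\<^esub> x))"
            hence "f \<in> T" using phiT[of a x] phiT[of a "inv\<^bsub>A\<^esub> x"] xT invT[OF xT] by auto
            thus False using False h Tc by auto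
          qed
          ultimately show ?thesis unfolding L R by blast
        qed
      qed
    qed
    also have "card \<dots> = (\<Sum>a\<in>{a\<in>carrier G. blk a = b}. card (phi a ` {x, inv\<^bsub>A\<^esub> x}))"
      by (rule card_SigmaI) (use finG in auto)
    also have "\<dots> = (\<Sum>a\<in>{a\<in>carrier G. blk a = b}. 2)"
    proof (rule sum.cong[OF refl])
      fix a assume "a \<in> {a\<in>carrier G. blk a = b}"
      hence a: "a \<in> carrier G" by auto
      have "card (phi a ` {x, inv\<^bsub>A\<^esub> x}) = card {x, inv\<^bsub>A\<^esub> x}"
        by (rule card_image, rule inj_on_subset[OF phiinj[rule_format, OF a]]) (use Tc[OF xT] in auto)
      also have "\<dots> = 2" using ninv[OF xT] by auto
      finally show "card (phi a ` {x, inv\<^bsub>A\<^esub> x}) = 2" .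
    qed
    also have "\<dots> = 2 * ([17,2,2,1,1,1]!b)" using blkc b by simp
    finally show ?thesis .
  qed
  have fib_ne: "fib k \<noteq> {}" if kk: "k \<in> set ks" for k
  proof -
    have "card (fib k) > 0"
    proof (cases k)
      case None thus ?thesis using cNone by simp
    next
      case (Some p)
      then obtain b x where p: "k = Some (b,x)" "b < 6" "x \<in> S" using kk setks by auto
      have "[17,2,2,1,1,1::nat]!b > 0" using p(2) by (auto simp: less_Suc_eq numeral_eq_Suc)
      thus ?thesis using cSome[OF p(2,3)] p(1) by simp
    qed
    thus ?thesis by auto
  qed
  have msetBs: "mset (map card Bs) = mset (blocksizes n)"
  proof -
    have "map card Bs = 24 # map (\<lambda>p. 2 * ([17,2,2,1,1,1]!fst p)) (List.product [0,1,2,3,4,5::nat] xs)"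
      unfolding Bs_def ks_def using cNone cSome xs(1)
      by (auto intro!: map_cong simp del: product.simps)
    also have "\<dots> = 24 # replicate n 34 @ replicate n 4 @ replicate n 4 @ replicate n 2 @ replicate n 2 @ replicate n 2"
      using lxs by (simp add: comp_def map_replicate_const)
    finally show ?thesis using mset_blocksizes by simp
  qed
  have count: "card {q\<in>carrier Gam. kap (g \<otimes>\<^bsub>Gam\<^esub> q) = kap q} = 24"
    if g: "g \<in> carrier Gam" "g \<noteq> \<one>\<^bsub>Gam\<^esub>" for g
  proof -
    obtain g1 f0 where gg: "g = (g1, f0)" and g1: "g1 \<in> carrier G" and f0: "f0 \<in> carrier A"
      using g(1) cGam by auto
    have oneGam: "\<one>\<^bsub>Gam\<^esub> = (\<one>\<^bsub>G\<^esub>, \<one>\<^bsub>A\<^esub>)" unfolding Gam_def by simp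
    have multg: "g \<otimes>\<^bsub>Gam\<^esub> (a, y) = (g1 \<otimes>\<^bsub>G\<^esub> a, f0 \<otimes>\<^bsub>A\<^esub> y)" for a y
      unfolding Gam_def gg by simp
    define Y where "Y a = {y\<in>carrier A. kap (g1 \<otimes>\<^bsub>G\<^esub> a, f0 \<otimes>\<^bsub>A\<^esub> y) = kap (a,y)}" for a
    have "{q\<in>carrier Gam. kap (g \<otimes>\<^bsub>Gam\<^esub> q) = kap q} = Sigma (carrier G) Y"
      unfolding Y_def cGam using multg by auto
    hence cardeq: "card {q\<in>carrier Gam. kap (g \<otimes>\<^bsub>Gam\<^esub> q) = kap q} = (\<Sum>a\<in>carrier G. card (Y a))"
      using finG finA by (simp add: Y_def card_SigmaI)
    have kapS: "kap (a, y) = Some (blk a, rep (psi a y))" if "y \<noteq> \<one>\<^bsub>A\<^esub>" for a y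
      unfolding kap_def using that by simp
    have kapN: "kap (a, \<one>\<^bsub>A\<^esub>) = None" for a unfolding kap_def by simp
    show ?thesis
    proof (cases "f0 = \<one>\<^bsub>A\<^esub>")
      case True
      hence g1n: "g1 \<noteq> \<one>\<^bsub>G\<^esub>" using g(2) gg oneGam by auto
      have "Y a = {\<one>\<^bsub>A\<^esub>}" if a: "a \<in> carrier G" for a
      proof (rule Set.set_eqI)
        fix y
        show "y \<in> Y a \<longleftrightarrow> y \<in> {\<one>\<^bsub>A\<^esub>}"
        proof (cases "y \<in> carrier A \<and> y \<noteq> \<one>\<^bsub>A\<^esub>")
          case False
          thus ?thesis unfolding Y_def True using kapN by auto
        next
          case yy: True
          define a' where "a' = g1 \<otimes>\<^bsub>G\<^esub> a"
          have a': "a' \<in> carrier G" unfolding a'_def using g1 a by simp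
          have aa: "a \<noteq> a'" unfolding a'_def using g1 a g1n by simp
          have yT: "y \<in> T" using yy unfolding T_def by simp
          have "kap (a', y) \<noteq> kap (a, y)"
          proof
            assume "kap (a', y) = kap (a, y)"
            hence bb: "blk a = blk a'" and rr: "rep (psi a' y) = rep (psi a y)"
              using kapS[OF yy[THEN conjunct2]] by auto
            define v where "v = psi a y"
            have vT: "v \<in> T" unfolding v_def using psiT[OF a yT] .
            have vA: "v \<in> carrier A" "v \<noteq> \<one>\<^bsub>A\<^esub>" using Tc[OF vT] by auto
            have yv: "y = phi a v" unfolding v_def using phipsi[OF a] yy by simp
            have "psi a' y = v \<or> psi a' y = inv\<^bsub>A\<^esub> v"
              using rep_eq[OF psiT[OF a' yT] vT] rr unfolding v_def by simp
            thus False
            proof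
              assume "psi a' y = v"
              hence "phi a' v = phi a v" using psi_eq[OF a'] yy vA yv by simp
              thus False using dif[rule_format, OF a a' aa bb vA(1)] vA by simp
            next
              assume "psi a' y = inv\<^bsub>A\<^esub> v"
              hence "y = phi a' (inv\<^bsub>A\<^esub> v)" using psi_eq[OF a'] yy vA by simp
              hence "phi a v = inv\<^bsub>A\<^esub> (phi a' v)" using phiinv[OF a' vA(1)] yv by simp
              thus False using sm[rule_format, OF a' a bb[symmetric] vA(1)] vA by simp
            qed
          qed
          thus ?thesis unfolding Y_def True a'_def using yy by simp
        qed
      qed
      hence "(\<Sum>a\<in>carrier G. card (Y a)) = (\<Sum>a\<in>carrier G. 1)" by simp
      thus ?thesis using cardeq cG by simp
    next
      case f0n: False
      define c where "c = (if g1 = \<one>\<^bsub>G\<^esub> then 1 else (2::nat))"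
      have percard: "card (Y a) = (if blk (g1 \<otimes>\<^bsub>G\<^esub> a) = blk a then c else 0)"
        if a: "a \<in> carrier G" for a
      proof -
        define a' where "a' = g1 \<otimes>\<^bsub>G\<^esub> a"
        have a': "a' \<in> carrier G" unfolding a'_def using g1 a by simp
        have aa: "a' = a \<longleftrightarrow> g1 = \<one>\<^bsub>G\<^esub>" unfolding a'_def using g1 a by simp
        have f0T: "f0 \<in> T" using f0 f0n unfolding T_def by simp
        show ?thesis
        proof (cases "blk a' = blk a")
          case False
          have "Y a = {}"
          proof -
            have "kap (a', f0 \<otimes>\<^bsub>A\<^esub> y) \<noteq> kap (a, y)" if y: "y \<in> carrier A" for y
            proof (cases "y = \<one>\<^bsub>A\<^esub>")
              case True thus ?thesis using kapN kapS f0n f0 by simp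
            next
              case yn: False
              show ?thesis
              proof (cases "f0 \<otimes>\<^bsub>A\<^esub> y = \<one>\<^bsub>A\<^esub>")
                case True thus ?thesis using kapN kapS yn by simp
              next
                case False thus ?thesis using kapS yn \<open>blk a' \<noteq> blk a\<close> by simp
              qed
            qed
            thus ?thesis unfolding Y_def a'_def by auto
          qed
          thus ?thesis using False unfolding a'_def by simp
        next
          case bb: True
          define D1 where "D1 z = phi a' z \<otimes>\<^bsub>A\<^esub> inv\<^bsub>A\<^esub> (phi a z)" for z
          define D2 where "D2 z = inv\<^bsub>A\<^esub> (phi a' z) \<otimes>\<^bsub>A\<^esub> inv\<^bsub>A\<^esub> (phi a z)" for z
          define Z1 where "Z1 = {z\<in>carrier A. z \<noteq> \<one>\<^bsub>A\<^esub> \<and> D1 z = f0}"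
          define Z2 where "Z2 = {z\<in>carrier A. z \<noteq> \<one>\<^bsub>A\<^esub> \<and> D2 z = f0}"
          have pA: "phi a z \<in> carrier A" "phi a' z \<in> carrier A" if "z \<in> carrier A" for z
            using phiA a a' that by auto
          have E1: "f0 \<otimes>\<^bsub>A\<^esub> phi a z = phi a' z \<longleftrightarrow> D1 z = f0" if z: "z \<in> carrier A" for z
            unfolding D1_def using A.inv_solve_right'[OF f0 pA(2)[OF z] pA(1)[OF z]] by auto
          have E2: "f0 \<otimes>\<^bsub>A\<^esub> phi a z = inv\<^bsub>A\<^esub> (phi a' z) \<longleftrightarrow> D2 z = f0" if z: "z \<in> carrier A" for z
            unfolding D2_def using A.inv_solve_right'[OF f0 A.inv_closed[OF pA(2)[OF z]] pA(1)[OF z]] by auto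
          have D1A: "\<forall>z\<in>carrier A. D1 z \<in> carrier A" unfolding D1_def using pA by simp
          have D2A: "\<forall>z\<in>carrier A. D2 z \<in> carrier A" unfolding D2_def using pA by simp
          have D1hom: "\<forall>x\<in>carrier A. \<forall>y\<in>carrier A. D1 (x \<otimes>\<^bsub>A\<^esub> y) = D1 x \<otimes>\<^bsub>A\<^esub> D1 y"
            unfolding D1_def using phihom a a' pA by (simp add: A.inv_mult A.m_ac)
          have D2hom: "\<forall>x\<in>carrier A. \<forall>y\<in>carrier A. D2 (x \<otimes>\<^bsub>A\<^esub> y) = D2 x \<otimes>\<^bsub>A\<^esub> D2 y"
            unfolding D2_def using phihom a a' pA by (simp add: A.inv_mult A.m_ac)
          have D11: "D1 \<one>\<^bsub>A\<^esub> = \<one>\<^bsub>A\<^esub>" unfolding D1_def using phi1 a a' by simp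
          have D21: "D2 \<one>\<^bsub>A\<^esub> = \<one>\<^bsub>A\<^esub>" unfolding D2_def using phi1 a a' by simp
          have D2ker: "\<forall>z\<in>carrier A. D2 z = \<one>\<^bsub>A\<^esub> \<longrightarrow> z = \<one>\<^bsub>A\<^esub>"
          proof (intro ballI impI)
            fix z assume z: "z \<in> carrier A" and h: "D2 z = \<one>\<^bsub>A\<^esub>"
            have "inv\<^bsub>A\<^esub> (phi a' z \<otimes>\<^bsub>A\<^esub> phi a z) = \<one>\<^bsub>A\<^esub>"
              using h pA[OF z] unfolding D2_def by (simp add: A.inv_mult)
            hence "phi a' z \<otimes>\<^bsub>A\<^esub> phi a z = \<one>\<^bsub>A\<^esub>" using pA[OF z] by simp
            hence "inv\<^bsub>A\<^esub> (phi a z) = phi a' z" using pA[OF z] A.inv_equality by blast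
            hence "phi a' z = inv\<^bsub>A\<^esub> (phi a z)" by simp
            thus "z = \<one>\<^bsub>A\<^esub>" using sm[rule_format, OF a a' bb[symmetric] z] by simp
          qed
          have cZ2: "card Z2 = 1" unfolding Z2_def
            by (rule A.unique_sol[OF finA D2A A.inj_hom_kernel[OF D2A D2hom D2ker] D21 f0 f0n])
          have cZ1: "card Z1 = (if a' = a then 0 else 1)"
          proof (cases "a' = a")
            case True
            hence "Z1 = {}" unfolding Z1_def D1_def using pA f0n by auto
            thus ?thesis using True by simp
          next
            case False
            have D1ker: "\<forall>z\<in>carrier A. D1 z = \<one>\<^bsub>A\<^esub> \<longrightarrow> z = \<one>\<^bsub>A\<^esub>"
            proof (intro ballI impI)
              fix z assume z: "z \<in> carrier A" and h: "D1 z = \<one>\<^bsub>A\<^esub>"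
              have "phi a' z = \<one>\<^bsub>A\<^esub> \<otimes>\<^bsub>A\<^esub> phi a z"
                using A.inv_solve_right[OF A.one_closed pA(2)[OF z] pA(1)[OF z]] h
                unfolding D1_def by simp
              hence "phi a' z = phi a z" using pA[OF z] by simp
              thus "z = \<one>\<^bsub>A\<^esub>" using dif[rule_format, OF a a' not_sym[OF False] bb[symmetric] z] by simp
            qed
            have "card Z1 = 1" unfolding Z1_def
              by (rule A.unique_sol[OF finA D1A A.inj_hom_kernel[OF D1A D1hom D1ker] D11 f0 f0n])
            thus ?thesis using False by simp
          qed
          have disj: "Z1 \<inter> Z2 = {}"
          proof -
            have False if z: "z \<in> Z1" "z \<in> Z2" for z
            proof -
              have zA: "z \<in> carrier A" "z \<noteq> \<one>\<^bsub>A\<^esub>" using z unfolding Z1_def by auto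
              have "phi a' z = inv\<^bsub>A\<^esub> (phi a' z)"
                using E1[OF zA(1)] E2[OF zA(1)] z unfolding Z1_def Z2_def by auto
              thus False using sm[rule_format, OF a' a' refl zA(1)] zA by simp
            qed
            thus ?thesis by blast
          qed
          have Yeq: "Y a = phi a ` (Z1 \<union> Z2)"
          proof (rule Set.set_eqI, rule iffI)
            fix y assume "y \<in> Y a"
            hence yA: "y \<in> carrier A" and ky: "kap (a', f0 \<otimes>\<^bsub>A\<^esub> y) = kap (a, y)"
              unfolding Y_def a'_def by auto
            have yn: "y \<noteq> \<one>\<^bsub>A\<^esub>"
            proof
              assume "y = \<one>\<^bsub>A\<^esub>" thus False using ky kapN kapS f0n f0 by simp
            qed
            have wA: "f0 \<otimes>\<^bsub>A\<^esub> y \<in> carrier A" using f0 yA by simp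
            have wn: "f0 \<otimes>\<^bsub>A\<^esub> y \<noteq> \<one>\<^bsub>A\<^esub>"
            proof
              assume "f0 \<otimes>\<^bsub>A\<^esub> y = \<one>\<^bsub>A\<^esub>" thus False using ky kapN kapS yn by simp
            qed
            have yT: "y \<in> T" and wT: "f0 \<otimes>\<^bsub>A\<^esub> y \<in> T" using yA yn wA wn unfolding T_def by auto
            define z where "z = psi a y"
            have zT: "z \<in> T" unfolding z_def using psiT[OF a yT] .
            have zA: "z \<in> carrier A" "z \<noteq> \<one>\<^bsub>A\<^esub>" using Tc[OF zT] by auto
            have yz: "y = phi a z" unfolding z_def using phipsi[OF a yA] by simp
            have "rep (psi a' (f0 \<otimes>\<^bsub>A\<^esub> y)) = rep z"
              using ky kapS[OF yn] kapS[OF wn] unfolding z_def by simp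
            hence "psi a' (f0 \<otimes>\<^bsub>A\<^esub> y) = z \<or> psi a' (f0 \<otimes>\<^bsub>A\<^esub> y) = inv\<^bsub>A\<^esub> z"
              using rep_eq[OF psiT[OF a' wT] zT] by simp
            hence "f0 \<otimes>\<^bsub>A\<^esub> y = phi a' z \<or> f0 \<otimes>\<^bsub>A\<^esub> y = inv\<^bsub>A\<^esub> (phi a' z)"
              using psi_eq[OF a' wA] zA phiinv[OF a' zA(1)] by auto
            hence "z \<in> Z1 \<union> Z2" using E1[OF zA(1)] E2[OF zA(1)] zA yz
              unfolding Z1_def Z2_def by auto
            thus "y \<in> phi a ` (Z1 \<union> Z2)" using yz by auto
          next
            fix y assume "y \<in> phi a ` (Z1 \<union> Z2)"
            then obtain z where yz: "y = phi a z" and zZ: "z \<in> Z1 \<union> Z2" by auto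
            have zA: "z \<in> carrier A" "z \<noteq> \<one>\<^bsub>A\<^esub>" using zZ unfolding Z1_def Z2_def by auto
            have zT: "z \<in> T" using zA unfolding T_def by simp
            have yA: "y \<in> carrier A" using yz pA zA by simp
            have yn: "y \<noteq> \<one>\<^bsub>A\<^esub>" using yz phi_one_iff[OF a zA(1)] zA by simp
            have pz: "psi a y = z" using psi_eq[OF a yA zA(1)] yz by simp
            have w: "f0 \<otimes>\<^bsub>A\<^esub> y = phi a' z \<or> f0 \<otimes>\<^bsub>A\<^esub> y = phi a' (inv\<^bsub>A\<^esub> z)"
              using zZ E1[OF zA(1)] E2[OF zA(1)] yz phiinv[OF a' zA(1)] unfolding Z1_def Z2_def by auto
            have wA: "f0 \<otimes>\<^bsub>A\<^esub> y \<in> carrier A" using f0 yA by simp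
            have izT: "inv\<^bsub>A\<^esub> z \<in> T" using invT[OF zT] .
            have wn: "f0 \<otimes>\<^bsub>A\<^esub> y \<noteq> \<one>\<^bsub>A\<^esub>"
              using w phiT[OF a' zT] phiT[OF a' izT] Tc by auto
            have "psi a' (f0 \<otimes>\<^bsub>A\<^esub> y) = z \<or> psi a' (f0 \<otimes>\<^bsub>A\<^esub> y) = inv\<^bsub>A\<^esub> z"
              using w psi_eq[OF a' wA] zA by auto
            hence "rep (psi a' (f0 \<otimes>\<^bsub>A\<^esub> y)) = rep z" using rep_inv[OF zT] by auto
            hence "kap (a', f0 \<otimes>\<^bsub>A\<^esub> y) = kap (a, y)"
              using kapS[OF yn] kapS[OF wn] pz bb by simp
            thus "y \<in> Y a" unfolding Y_def a'_def using yA by simp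
          qed
          have "card (Y a) = card (Z1 \<union> Z2)" unfolding Yeq
            by (rule card_image, rule inj_on_subset[OF phiinj[rule_format, OF a]])
               (auto simp: Z1_def Z2_def)
          also have "\<dots> = card Z1 + card Z2"
            by (rule card_Un_disjoint) (use finA disj in \<open>auto simp: Z1_def Z2_def\<close>)
          finally show ?thesis using cZ1 cZ2 aa bb unfolding c_def a'_def by simp
        qed
      qed
      have "(\<Sum>a\<in>carrier G. card (Y a)) = (\<Sum>a\<in>carrier G. if blk (g1 \<otimes>\<^bsub>G\<^esub> a) = blk a then c else 0)"
        using percard by simp
      also have "\<dots> = c * card {a\<in>carrier G. blk (g1 \<otimes>\<^bsub>G\<^esub> a) = blk a}"
        using finG by (simp add: sum.If_cases Int_def)
      also have "\<dots> = 24"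
      proof (cases "g1 = \<one>\<^bsub>G\<^esub>")
        case True
        hence "{a\<in>carrier G. blk (g1 \<otimes>\<^bsub>G\<^esub> a) = blk a} = carrier G" by auto
        thus ?thesis using True cG unfolding c_def by simp
      next
        case False
        thus ?thesis using twelve g1 unfolding c_def by simp
      qed
      finally show ?thesis using cardeq by simp
    qed
  qed
  show ?thesis unfolding has_PDF_def
  proof (rule exI[of _ Bs], unfold is_PDF_def, intro conjI)
    show "card (carrier (G \<times>\<times> A)) = 48 * n + 24" using cG cA
      by (simp add: card_cartesian_product)
    show "\<forall>B\<in>set Bs. B \<subseteq> carrier (G \<times>\<times> A) \<and> B \<noteq> {}"
      unfolding Bs_def using fib_ne unfolding fib_def Gam_def by auto
    show "\<forall>i<length Bs. \<forall>j<length Bs. i \<noteq> j \<longrightarrow> Bs ! i \<inter> Bs ! j = {}"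
    proof (intro allI impI)
      fix i j assume ij: "i < length Bs" "j < length Bs" "i \<noteq> j"
      hence "ks ! i \<noteq> ks ! j" using dks unfolding Bs_def by (simp add: nth_eq_iff_index_eq)
      thus "Bs ! i \<inter> Bs ! j = {}" using ij unfolding Bs_def fib_def by auto
    qed
    show "\<Union> (set Bs) = carrier (G \<times>\<times> A)"
      using kin unfolding Bs_def fib_def Gam_def by auto
    show "mset (map card Bs) = mset (blocksizes n)" by (fact msetBs)
    show "\<forall>g\<in>carrier (G \<times>\<times> A). g \<noteq> \<one>\<^bsub>G \<times>\<times> A\<^esub> \<longrightarrow>
        sum_list (map (\<lambda>B. card {(x, y). x \<in> B \<and> y \<in> B \<and> x \<noteq> y \<and>
                                   x \<otimes>\<^bsub>G \<times>\<times> A\<^esub> inv\<^bsub>G \<times>\<times> A\<^esub> y = g}) Bs) = 24"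
    proof (intro ballI impI)
      fix g assume g: "g \<in> carrier (G \<times>\<times> A)" "g \<noteq> \<one>\<^bsub>G \<times>\<times> A\<^esub>"
      show "sum_list (map (\<lambda>B. card {(x, y). x \<in> B \<and> y \<in> B \<and> x \<noteq> y \<and>
                                   x \<otimes>\<^bsub>G \<times>\<times> A\<^esub> inv\<^bsub>G \<times>\<times> A\<^esub> y = g}) Bs) = 24"
        using fiber_sum[OF grGam finGam dks kin, of g] count[of g] g
        unfolding Bs_def fib_def Gam_def by simp
    qed
  qed
qed

lemma components_finite: "finite (components m)"
  unfolding components_def
  by (metis (mono_tags) finite_imageI finite_set_mset image_def Setcompr_eq_image)

lemma components_dvd: "q \<in> components m \<Longrightarrow> q dvd m"
  unfolding components_def using multiplicity_dvd by auto

lemma prod_components: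
  assumes "m \<noteq> 0" shows "(\<Prod>q\<in>components m. q) = m"
proof -
  have ceq: "components m = (\<lambda>p. p ^ multiplicity p m) ` prime_factors m"
    unfolding components_def by auto
  have inj: "inj_on (\<lambda>p. p ^ multiplicity p m) (prime_factors m)"
  proof (rule inj_onI)
    fix p p' assume p: "p \<in> prime_factors m" and p': "p' \<in> prime_factors m"
      and eq: "p ^ multiplicity p m = p' ^ multiplicity p' m"
    have pp: "normalization_semidom_class.prime p" "multiplicity p m > 0" using p prime_factors_multiplicity by auto
    have pp': "normalization_semidom_class.prime p'" using p' prime_factors_multiplicity by auto
    have "p dvd p ^ multiplicity p m" using pp(2) by (simp add: dvd_power)
    hence "p dvd p' ^ multiplicity p' m" using eq by simp
    hence "p dvd p'" using prime_dvd_power pp(1) by blast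
    thus "p = p'" using primes_dvd_imp_eq pp(1) pp' by blast
  qed
  have "(\<Prod>q\<in>components m. q) = (\<Prod>p\<in>prime_factors m. p ^ multiplicity p m)"
    unfolding ceq by (simp add: prod.reindex[OF inj])
  also have "\<dots> = m" using prod_prime_factors[OF assms] by simp
  finally show ?thesis .
qed

lemma field_half:
  assumes F: "field R" "finite (carrier R)" "odd (card (carrier R))" "card (carrier R) > 34"
  shows "\<exists>h::nat \<Rightarrow> _. (\<forall>k<17. h k \<in> carrier R \<and> h k \<noteq> \<zero>\<^bsub>R\<^esub>)
     \<and> (\<forall>k<17. \<forall>k'<17. h k \<noteq> \<ominus>\<^bsub>R\<^esub> h k') \<and> (\<forall>k<17. \<forall>k'<17. h k = h k' \<longrightarrow> k = k')"
proof -
  interpret field R by fact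
  have cc: "carrier (add_monoid R) = carrier R" by simp
  obtain S where S0: "S \<subseteq> carrier R - {\<zero>\<^bsub>R\<^esub>}" and S1: "\<forall>z\<in>S. inv\<^bsub>add_monoid R\<^esub> z \<notin> S"
      and S3: "2 * card S + 1 = card (carrier R)"
    using group.half_system[OF a_group] F(2,3) by auto
  have S1': "\<forall>z\<in>S. \<ominus>\<^bsub>R\<^esub> z \<notin> S" using S1 by (simp add: a_inv_def)
  have "card {0..<17::nat} \<le> card S" using S3 F(4) by simp
  moreover have "finite S" using S0 F(2) finite_subset by blast
  ultimately obtain h where h: "h ` {0..<17::nat} \<subseteq> S" "inj_on h {0..<17}"
    using card_le_inj[of "{0..<17::nat}" S] by auto
  show ?thesis
  proof (rule exI[of _ h], intro conjI allI impI)
    fix k assume "k < (17::nat)"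
    hence "h k \<in> S" using h(1) by auto
    thus "h k \<in> carrier R" "h k \<noteq> \<zero>\<^bsub>R\<^esub>" using S0 by auto
  next
    fix k k' :: nat assume "k < (17::nat)" "k' < 17"
    hence "h k \<in> S" "h k' \<in> S" using h(1) by auto
    moreover have "h k' \<in> carrier R" using \<open>h k' \<in> S\<close> S0 by auto
    ultimately show "h k \<noteq> \<ominus>\<^bsub>R\<^esub> h k'" using S1' by (metis minus_minus)
  next
    fix k k' :: nat assume "k < (17::nat)" "k' < 17" "h k = h k'"
    thus "k = k'" using h(2) unfolding inj_on_def by auto
  qed
qed

lemma PiE_eqI: "z \<in> PiE I F \<Longrightarrow> (\<And>i. i \<in> I \<Longrightarrow> z i = c i) \<Longrightarrow> z = restrict c I"
  by (metis PiE_restrict restrict_ext)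

lemma fld_a_comm: "field R \<Longrightarrow> x \<in> carrier R \<Longrightarrow> y \<in> carrier R \<Longrightarrow> x \<oplus>\<^bsub>R\<^esub> y = y \<oplus>\<^bsub>R\<^esub> x"
proof -
  assume "field R" then interpret field R .
  show "x \<in> carrier R \<Longrightarrow> y \<in> carrier R \<Longrightarrow> x \<oplus>\<^bsub>R\<^esub> y = y \<oplus>\<^bsub>R\<^esub> x" by (rule a_comm)
qed

lemma fld_m_closed: "field R \<Longrightarrow> x \<in> carrier R \<Longrightarrow> y \<in> carrier R \<Longrightarrow> x \<otimes>\<^bsub>R\<^esub> y \<in> carrier R"
  by (simp add: field.is_ring ring.ring_simprules(5))

lemma fld_r_distr: "field R \<Longrightarrow> x \<in> carrier R \<Longrightarrow> y \<in> carrier R \<Longrightarrow> z \<in> carrier R \<Longrightarrow>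
   z \<otimes>\<^bsub>R\<^esub> (x \<oplus>\<^bsub>R\<^esub> y) = z \<otimes>\<^bsub>R\<^esub> x \<oplus>\<^bsub>R\<^esub> z \<otimes>\<^bsub>R\<^esub> y"
proof -
  assume "field R" then interpret field R .
  show "x \<in> carrier R \<Longrightarrow> y \<in> carrier R \<Longrightarrow> z \<in> carrier R \<Longrightarrow>
   z \<otimes>\<^bsub>R\<^esub> (x \<oplus>\<^bsub>R\<^esub> y) = z \<otimes>\<^bsub>R\<^esub> x \<oplus>\<^bsub>R\<^esub> z \<otimes>\<^bsub>R\<^esub> y" by (rule r_distr)
qed

lemma fld_rcancel: "field R \<Longrightarrow> z \<noteq> \<zero>\<^bsub>R\<^esub> \<Longrightarrow> a \<in> carrier R \<Longrightarrow> b \<in> carrier R \<Longrightarrow> z \<in> carrier R \<Longrightarrow>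
   a \<otimes>\<^bsub>R\<^esub> z = b \<otimes>\<^bsub>R\<^esub> z \<Longrightarrow> a = b"
  using domain.m_rcancel field.axioms(1) by metis

lemma fld_lminus: "field R \<Longrightarrow> x \<in> carrier R \<Longrightarrow> y \<in> carrier R \<Longrightarrow>
   \<ominus>\<^bsub>R\<^esub> (x \<otimes>\<^bsub>R\<^esub> y) = (\<ominus>\<^bsub>R\<^esub> x) \<otimes>\<^bsub>R\<^esub> y"
  by (simp add: field.is_ring ring.l_minus)

lemma fld_ainv_closed: "field R \<Longrightarrow> x \<in> carrier R \<Longrightarrow> \<ominus>\<^bsub>R\<^esub> x \<in> carrier R"
  by (simp add: field.is_ring ring.ring_simprules(3))

lemma addF_PDF:
  fixes G :: "('a,'m) monoid_scheme" and Fld :: "nat \<Rightarrow> 'b ring" and blk pos :: "'a \<Rightarrow> nat"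
  assumes grG: "group G" and finG: "finite (carrier G)" and cG: "card (carrier G) = 24"
    and comp: "\<forall>q \<in> components (2*n+1). q > 34"
    and ff: "is_field_family (2*n+1) Fld"
    and blk6: "\<forall>a\<in>carrier G. blk a < 6"
    and blkc: "\<forall>b<6. card {a\<in>carrier G. blk a = b} = [17,2,2,1,1,1]!b"
    and pos17: "\<forall>a\<in>carrier G. pos a < 17"
    and bpinj: "\<forall>a\<in>carrier G. \<forall>a'\<in>carrier G. blk a = blk a' \<longrightarrow> pos a = pos a' \<longrightarrow> a = a'"
    and twelve: "\<forall>g\<in>carrier G. g \<noteq> \<one>\<^bsub>G\<^esub> \<longrightarrow>
                   card {a\<in>carrier G. blk (g \<otimes>\<^bsub>G\<^esub> a) = blk a} = 12"
  shows "has_PDF (G \<times>\<times> addF (2*n+1) Fld) (48*n+24) (blocksizes n) 24"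
proof -
  define m where "m = 2*n+1"
  define I where "I = components m"
  define A where "A = addF m Fld"
  have finI: "finite I" unfolding I_def by (rule components_finite)
  have fld: "field (Fld q)" "finite (carrier (Fld q))" "card (carrier (Fld q)) = q" if "q \<in> I" for q
    using ff that unfolding is_field_family_def I_def m_def by auto
  have grp: "group (add_monoid (Fld q))" if "q \<in> I" for q
    by (rule abelian_group.a_group[OF ring.is_abelian_group[OF field.is_ring[OF fld(1)[OF that]]]])
  have Aeq: "A = product_group I (\<lambda>q. add_monoid (Fld q))" unfolding A_def addF_def I_def by simp
  have carA: "carrier A = PiE I (\<lambda>q. carrier (Fld q))" by (simp add: Aeq)
  have multA: "x \<otimes>\<^bsub>A\<^esub> y = (\<lambda>i\<in>I. x i \<oplus>\<^bsub>Fld i\<^esub> y i)" for x y by (simp add: Aeq)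
  have oneA: "\<one>\<^bsub>A\<^esub> = (\<lambda>i\<in>I. \<zero>\<^bsub>Fld i\<^esub>)" by (simp add: Aeq)
  have invA: "inv\<^bsub>A\<^esub> x = (\<lambda>i\<in>I. \<ominus>\<^bsub>Fld i\<^esub> x i)" if "x \<in> carrier A" for x
    using that grp unfolding Aeq by (simp add: a_inv_def)
  have grA: "group A" unfolding Aeq using grp by simp
  have cgrA: "comm_group A"
  proof (rule group.group_comm_groupI[OF grA])
    fix x y assume "x \<in> carrier A" "y \<in> carrier A"
    thus "x \<otimes>\<^bsub>A\<^esub> y = y \<otimes>\<^bsub>A\<^esub> x" unfolding multA carA
      by (intro restrict_ext) (auto simp: PiE_iff intro: fld_a_comm[OF fld(1)])
  qed
  have finA: "finite (carrier A)" unfolding carA using finI fld(2) by (simp add: finite_PiE)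
  have cA: "card (carrier A) = 2*n+1"
  proof -
    have "card (carrier A) = (\<Prod>q\<in>I. card (carrier (Fld q)))" unfolding carA using finI by (simp add: card_PiE)
    also have "\<dots> = (\<Prod>q\<in>I. q)" using fld(3) by simp
    also have "\<dots> = m" unfolding I_def by (rule prod_components) (simp add: m_def)
    finally show ?thesis unfolding m_def .
  qed
  have "\<forall>q\<in>I. \<exists>h::nat \<Rightarrow> 'b. (\<forall>k<17. h k \<in> carrier (Fld q) \<and> h k \<noteq> \<zero>\<^bsub>Fld q\<^esub>)
     \<and> (\<forall>k<17. \<forall>k'<17. h k \<noteq> \<ominus>\<^bsub>Fld q\<^esub> h k') \<and> (\<forall>k<17. \<forall>k'<17. h k = h k' \<longrightarrow> k = k')"
  proof
    fix q assume q: "q \<in> I"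
    have "q dvd m" using q components_dvd unfolding I_def by blast
    hence "odd q" unfolding m_def by (metis dvd_trans even_add odd_one dvd_triv_left)
    thus "\<exists>h::nat \<Rightarrow> 'b. (\<forall>k<17. h k \<in> carrier (Fld q) \<and> h k \<noteq> \<zero>\<^bsub>Fld q\<^esub>)
     \<and> (\<forall>k<17. \<forall>k'<17. h k \<noteq> \<ominus>\<^bsub>Fld q\<^esub> h k') \<and> (\<forall>k<17. \<forall>k'<17. h k = h k' \<longrightarrow> k = k')"
      using field_half[OF fld(1,2)[OF q]] fld(3)[OF q] comp q unfolding I_def m_def by auto
  qed
  then obtain H where H: "\<forall>q\<in>I. (\<forall>k<(17::nat). H q k \<in> carrier (Fld q) \<and> H q k \<noteq> \<zero>\<^bsub>Fld q\<^esub>)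
     \<and> (\<forall>k<(17::nat). \<forall>k'<(17::nat). H q k \<noteq> \<ominus>\<^bsub>Fld q\<^esub> H q k') \<and> (\<forall>k<(17::nat). \<forall>k'<(17::nat). H q k = H q k' \<longrightarrow> k = k')"
    by (rule bchoice[THEN exE]) blast
  have Hc: "H i (pos a) \<in> carrier (Fld i)" "H i (pos a) \<noteq> \<zero>\<^bsub>Fld i\<^esub>" if "i \<in> I" "a \<in> carrier G" for i a
  proof -
    have p: "pos a < 17" using pos17 that(2) by blast
    have "\<forall>k<17. H i k \<in> carrier (Fld i) \<and> H i k \<noteq> \<zero>\<^bsub>Fld i\<^esub>" using H that(1) by blast
    thus "H i (pos a) \<in> carrier (Fld i)" "H i (pos a) \<noteq> \<zero>\<^bsub>Fld i\<^esub>" using p by blast+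
  qed
  define phi where "phi a z = (\<lambda>i\<in>I. H i (pos a) \<otimes>\<^bsub>Fld i\<^esub> z i)" for a z
  have zc: "z i \<in> carrier (Fld i)" if "z \<in> carrier A" "i \<in> I" for z i
    using that unfolding carA by (auto simp: PiE_iff)
  have phiA: "\<forall>a\<in>carrier G. \<forall>z\<in>carrier A. phi a z \<in> carrier A"
    unfolding phi_def using zc Hc fld(1) carA
    by (auto simp: PiE_iff intro!: fld_m_closed[OF fld(1)])
  have phihom: "\<forall>a\<in>carrier G. \<forall>x\<in>carrier A. \<forall>y\<in>carrier A.
                    phi a (x \<otimes>\<^bsub>A\<^esub> y) = phi a x \<otimes>\<^bsub>A\<^esub> phi a y"
  proof (intro ballI)
    fix a x y assume a: "a \<in> carrier G" and x: "x \<in> carrier A" and y: "y \<in> carrier A"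
    show "phi a (x \<otimes>\<^bsub>A\<^esub> y) = phi a x \<otimes>\<^bsub>A\<^esub> phi a y"
      unfolding phi_def multA
      by (intro restrict_ext) (simp add: fld_r_distr[OF fld(1)] zc[OF x] zc[OF y] Hc[OF _ a])
  qed
  have compeq: "f i = g i" if "f = g" for f g :: "nat \<Rightarrow> 'b" and i using that by simp
  have phiinj: "\<forall>a\<in>carrier G. inj_on (phi a) (carrier A)"
  proof (intro ballI inj_onI)
    fix a x y assume a: "a \<in> carrier G" and x: "x \<in> carrier A" and y: "y \<in> carrier A"
      and eq: "phi a x = phi a y"
    show "x = y"
    proof (rule PiE_ext[OF x[unfolded carA] y[unfolded carA]])
      fix i assume i: "i \<in> I"
      have "H i (pos a) \<otimes>\<^bsub>Fld i\<^esub> x i = H i (pos a) \<otimes>\<^bsub>Fld i\<^esub> y i"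
        using compeq[OF eq, of i] i unfolding phi_def by simp
      hence "x i = y i" using domain.m_lcancel[OF field.axioms(1)[OF fld(1)[OF i]] Hc(2)[OF i a] Hc(1)[OF i a] zc[OF x i] zc[OF y i]] by simp
      thus "x i = y i" .
    qed
  qed
  have Hinj: "H i (pos a) \<noteq> H i (pos a')" if "i \<in> I" "a \<in> carrier G" "a' \<in> carrier G"
      "a \<noteq> a'" "blk a = blk a'" for i a a'
  proof -
    have p: "pos a < 17" "pos a' < 17" using pos17 that(2,3) by blast+
    have pp: "pos a \<noteq> pos a'" using bpinj that(2-5) by blast
    have "\<forall>k<(17::nat). \<forall>k'<17. H i k = H i k' \<longrightarrow> k = k'" using H that(1) by blast
    thus ?thesis using p pp by blast
  qed
  have Hneg: "H i (pos a') \<noteq> \<ominus>\<^bsub>Fld i\<^esub> H i (pos a)" if "i \<in> I" "a \<in> carrier G" "a' \<in> carrier G" for i a a'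
  proof -
    have p: "pos a < 17" "pos a' < 17" using pos17 that(2,3) by blast+
    have "\<forall>k<(17::nat). \<forall>k'<17. H i k \<noteq> \<ominus>\<^bsub>Fld i\<^esub> H i k'" using H that(1) by blast
    thus ?thesis using p by blast
  qed
  have dif: "\<forall>a\<in>carrier G. \<forall>a'\<in>carrier G. a \<noteq> a' \<longrightarrow> blk a = blk a' \<longrightarrow>
                (\<forall>z\<in>carrier A. phi a' z = phi a z \<longrightarrow> z = \<one>\<^bsub>A\<^esub>)"
  proof (intro ballI impI)
    fix a a' z assume a: "a \<in> carrier G" and a': "a' \<in> carrier G" and aa: "a \<noteq> a'"
      and bb: "blk a = blk a'" and z: "z \<in> carrier A" and eq: "phi a' z = phi a z"
    show "z = \<one>\<^bsub>A\<^esub>" unfolding oneA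
    proof (rule PiE_eqI[OF z[unfolded carA]])
      fix i assume i: "i \<in> I"
      have e: "H i (pos a') \<otimes>\<^bsub>Fld i\<^esub> z i = H i (pos a) \<otimes>\<^bsub>Fld i\<^esub> z i"
        using compeq[OF eq, of i] i unfolding phi_def by simp
      show "z i = \<zero>\<^bsub>Fld i\<^esub>"
      proof (rule ccontr)
        assume "z i \<noteq> \<zero>\<^bsub>Fld i\<^esub>"
        hence "H i (pos a') = H i (pos a)"
          using fld_rcancel[OF fld(1)[OF i] _ Hc(1)[OF i a'] Hc(1)[OF i a] zc[OF z i] e] by blast
        thus False using Hinj[OF i a a' aa bb] by simp
      qed
    qed
  qed
  have sm: "\<forall>a\<in>carrier G. \<forall>a'\<in>carrier G. blk a = blk a' \<longrightarrow>
                (\<forall>z\<in>carrier A. phi a' z = inv\<^bsub>A\<^esub> (phi a z) \<longrightarrow> z = \<one>\<^bsub>A\<^esub>)"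
  proof (intro ballI impI)
    fix a a' z assume a: "a \<in> carrier G" and a': "a' \<in> carrier G"
      and bb: "blk a = blk a'" and z: "z \<in> carrier A" and eq: "phi a' z = inv\<^bsub>A\<^esub> (phi a z)"
    have eq': "phi a' z = (\<lambda>i\<in>I. \<ominus>\<^bsub>Fld i\<^esub> (phi a z i))"
      using eq invA phiA a z by simp
    show "z = \<one>\<^bsub>A\<^esub>" unfolding oneA
    proof (rule PiE_eqI[OF z[unfolded carA]])
      fix i assume i: "i \<in> I"
      have e: "H i (pos a') \<otimes>\<^bsub>Fld i\<^esub> z i = \<ominus>\<^bsub>Fld i\<^esub> (H i (pos a) \<otimes>\<^bsub>Fld i\<^esub> z i)"
        using compeq[OF eq', of i] i unfolding phi_def by simp
      also have "\<dots> = (\<ominus>\<^bsub>Fld i\<^esub> H i (pos a)) \<otimes>\<^bsub>Fld i\<^esub> z i"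
        by (rule fld_lminus[OF fld(1)[OF i] Hc(1)[OF i a] zc[OF z i]])
      finally have e2: "H i (pos a') \<otimes>\<^bsub>Fld i\<^esub> z i = (\<ominus>\<^bsub>Fld i\<^esub> H i (pos a)) \<otimes>\<^bsub>Fld i\<^esub> z i" .
      show "z i = \<zero>\<^bsub>Fld i\<^esub>"
      proof (rule ccontr)
        assume "z i \<noteq> \<zero>\<^bsub>Fld i\<^esub>"
        hence "H i (pos a') = \<ominus>\<^bsub>Fld i\<^esub> H i (pos a)"
          using fld_rcancel[OF fld(1)[OF i] _ Hc(1)[OF i a'] fld_ainv_closed[OF fld(1)[OF i] Hc(1)[OF i a]] zc[OF z i] e2] by blast
        thus False using Hneg[OF i a a'] by simp
      qed
    qed
  qed
  show ?thesis
    using gen_PDF[OF grG finG cG cgrA finA cA blk6 blkc phiA phihom phiinj dif sm twelve]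
    unfolding A_def m_def .
qed

fun idx :: "'a \<Rightarrow> 'a list \<Rightarrow> nat" where
  "idx x [] = 0"
| "idx x (y # ys) = (if x = y then 0 else Suc (idx x ys))"

definition bk :: "nat \<Rightarrow> nat" where
  "bk i = (if i < 17 then 0 else if i < 19 then 1 else if i < 21 then 2 else i - 18)"

lemma bk_inj: "i < 24 \<Longrightarrow> j < 24 \<Longrightarrow> bk i = bk j \<Longrightarrow> i mod 17 = j mod 17 \<Longrightarrow> i = (j::nat)"
  unfolding bk_def by (simp add: mod_if split: if_splits)

lemma list_PDF:
  fixes G :: "('a,'m) monoid_scheme" and Fld :: "nat \<Rightarrow> 'b ring" and L :: "'a list"
  assumes grG: "group G" and cL: "carrier G = set L" and dL: "distinct L" and lL: "length L = 24"
    and comp: "\<forall>q \<in> components (2*n+1). q > 34"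
    and ff: "is_field_family (2*n+1) Fld"
    and twelve: "\<forall>g\<in>set L. g \<noteq> \<one>\<^bsub>G\<^esub> \<longrightarrow>
                   length (filter (\<lambda>a. bk (idx (g \<otimes>\<^bsub>G\<^esub> a) L) = bk (idx a L)) L) = 12"
  shows "has_PDF (G \<times>\<times> addF (2*n+1) Fld) (48*n+24) (blocksizes n) 24"
proof -
  define blk where "blk a = bk (idx a L)" for a
  define pos where "pos a = idx a L mod 17" for a
  have idx_nth: "idx (L ! i) L = i" if "i < length L" for i
    using that dL
  proof (induction L arbitrary: i)
    case Nil thus ?case by simp
  next
    case (Cons y ys)
    show ?case
    proof (cases i)
      case 0 thus ?thesis by simp
    next
      case (Suc j)
      hence "ys ! j \<noteq> y" using Cons.prems by (auto simp: nth_mem)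
      thus ?thesis using Cons Suc by simp
    qed
  qed
  have idx_lt: "idx a L < length L" if "a \<in> set L" for a
    using that by (induction L) auto
  have nth_idx: "L ! idx a L = a" if "a \<in> set L" for a
    using that by (induction L) auto
  have card_filter: "card {a\<in>carrier G. P a} = length (filter P L)" for P
    using distinct_length_filter[OF dL, of P] cL by (simp add: Int_def conj_commute)
  have bij: "bij_betw (\<lambda>a. idx a L) (set L) {..<24}"
  proof (rule bij_betw_byWitness[where f'="\<lambda>i. L ! i"])
    show "\<forall>a\<in>set L. L ! idx a L = a" using nth_idx by blast
    show "\<forall>i\<in>{..<24}. idx (L ! i) L = i" using idx_nth lL by auto
    show "(\<lambda>a. idx a L) ` set L \<subseteq> {..<24}" using idx_lt lL by auto
    show "(\<lambda>i. L ! i) ` {..<24} \<subseteq> set L" using lL by auto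
  qed
  have blk6: "\<forall>a\<in>carrier G. blk a < 6"
    using idx_lt lL cL unfolding blk_def bk_def by fastforce
  have pos17: "\<forall>a\<in>carrier G. pos a < 17" unfolding pos_def by simp
  have bpinj: "\<forall>a\<in>carrier G. \<forall>a'\<in>carrier G. blk a = blk a' \<longrightarrow> pos a = pos a' \<longrightarrow> a = a'"
  proof (intro ballI impI)
    fix a a' assume a: "a \<in> carrier G" and a': "a' \<in> carrier G" and b: "blk a = blk a'" and p: "pos a = pos a'"
    have i: "idx a L < 24" "idx a' L < 24" using idx_lt a a' cL lL by auto
    have "idx a L = idx a' L" using bk_inj[OF i] b p unfolding blk_def pos_def by simp
    thus "a = a'" using nth_idx a a' cL by metis
  qed
  have blkc: "\<forall>b<6. card {a\<in>carrier G. blk a = b} = [17,2,2,1,1,1]!b"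
  proof (intro allI impI)
    fix b :: nat assume b: "b < 6"
    have "card {a\<in>carrier G. blk a = b} = card {a\<in>set L. bk (idx a L) = b}"
      unfolding blk_def cL by simp
    also have "\<dots> = card ((\<lambda>a. idx a L) ` {a\<in>set L. bk (idx a L) = b})"
      by (rule card_image[symmetric], rule inj_on_subset[OF bij_betw_imp_inj_on[OF bij]]) auto
    also have "(\<lambda>a. idx a L) ` {a\<in>set L. bk (idx a L) = b} = {i\<in>{..<24}. bk i = b}"
      using bij unfolding bij_betw_def by auto
    also have "card {i\<in>{..<24::nat}. bk i = b} = [17,2,2,1,1,1]!b"
    proof -
      have "b = 0 \<or> b = 1 \<or> b = 2 \<or> b = 3 \<or> b = 4 \<or> b = 5" using b by auto
      moreover have "{i\<in>{..<24::nat}. bk i = 0} = {..<17}" unfolding bk_def by auto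
      moreover have "{i\<in>{..<24::nat}. bk i = 1} = {17,18}" unfolding bk_def by auto
      moreover have "{i\<in>{..<24::nat}. bk i = 2} = {19,20}" unfolding bk_def by auto
      moreover have "{i\<in>{..<24::nat}. bk i = 3} = {21}" unfolding bk_def by auto
      moreover have "{i\<in>{..<24::nat}. bk i = 4} = {22}" unfolding bk_def by auto
      moreover have "{i\<in>{..<24::nat}. bk i = 5} = {23}" unfolding bk_def by auto
      ultimately show ?thesis by auto
    qed
    finally show "card {a\<in>carrier G. blk a = b} = [17,2,2,1,1,1]!b" .
  qed
  have tw: "\<forall>g\<in>carrier G. g \<noteq> \<one>\<^bsub>G\<^esub> \<longrightarrow> card {a\<in>carrier G. blk (g \<otimes>\<^bsub>G\<^esub> a) = blk a} = 12"
    using twelve card_filter cL unfolding blk_def by simp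
  have finG: "finite (carrier G)" using cL by simp
  have cG: "card (carrier G) = 24" using cL dL lL distinct_card by metis
  show ?thesis
    by (rule addF_PDF[OF grG finG cG comp ff blk6 blkc pos17 bpinj tw])
qed

definition LC :: "(nat \<times> nat) list" where
  "LC = [(0, 2), (1, 1), (1, 2), (2, 0), (2, 1), (3, 1), (3, 2), (4, 0), (4, 1), (4, 2), (5, 0), (5, 2), (6, 0), (6, 1), (6, 2), (7, 1), (7, 2), (1, 0), (5, 1), (0, 0), (0, 1), (7, 0), (2, 2), (3, 0)]"

lemma C_carrier: "carrier C3_rtimes_C8 = set LC"
proof -
  have "{0..<8::nat} = {0,1,2,3,4,5,6,7}" "{0..<3::nat} = {0,1,2}" by auto
  thus ?thesis unfolding C3_rtimes_C8_def LC_def by auto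
qed

lemma C_twelve: "\<forall>g\<in>set LC. g \<noteq> \<one>\<^bsub>C3_rtimes_C8\<^esub> \<longrightarrow>
                   length (filter (\<lambda>a. bk (idx (g \<otimes>\<^bsub>C3_rtimes_C8\<^esub> a) LC) = bk (idx a LC)) LC) = 12"
  unfolding LC_def C3_rtimes_C8_def bk_def by code_simp

lemma m2mod: "(2 * (x mod 3) + q) mod 3 = (2 * x + q) mod (3::nat)"
  by (metis mod_add_left_eq mod_mult_right_eq)

lemma C_assoc_aux:
  fixes i j k l p q :: nat
  assumes "k < 8" "p < 8"
  shows "(\<lambda>(i, j) (k, l). ((i + k) mod 8, (if even k then j + l else 2 * j + l) mod 3))
          ((\<lambda>(i, j) (k, l). ((i + k) mod 8, (if even k then j + l else 2 * j + l) mod 3)) (i,j) (k,l)) (p,q)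
       = (\<lambda>(i, j) (k, l). ((i + k) mod 8, (if even k then j + l else 2 * j + l) mod 3)) (i,j)
          ((\<lambda>(i, j) (k, l). ((i + k) mod 8, (if even k then j + l else 2 * j + l) mod 3)) (k,l) (p,q))"
proof -
  have ev: "even ((k + p) mod 8) = even (k + p)" by presburger
  have c1: "((i + k) mod 8 + p) mod 8 = (i + (k + p) mod 8) mod 8" by (simp add: mod_simps add.assoc)
  have c2: "(if even p then (if even k then j + l else 2 * j + l) mod 3 + q
             else 2 * ((if even k then j + l else 2 * j + l) mod 3) + q) mod 3
          = (if even ((k + p) mod 8) then j + (if even p then l + q else 2 * l + q) mod 3
             else 2 * j + (if even p then l + q else 2 * l + q) mod 3) mod 3"
  proof (cases "even k"; cases "even p")
    assume "even k" "even p" thus ?thesis using ev by (simp add: mod_simps add.assoc)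
  next
    assume "even k" "odd p" thus ?thesis using ev by (simp add: m2mod mod_simps add.assoc distrib_left)
  next
    assume "odd k" "even p" thus ?thesis using ev by (simp add: mod_simps add.assoc)
  next
    assume "odd k" "odd p"
    hence e: "even ((k + p) mod 8)" using ev by simp
    have "(2 * ((2 * j + l) mod 3) + q) mod 3 = (2 * (2 * j + l) + q) mod 3" by (rule m2mod)
    also have "2 * (2 * j + l) + q = 3 * j + (j + (2 * l + q))" by simp
    finally have "(2 * ((2 * j + l) mod 3) + q) mod 3 = (3 * j + (j + (2 * l + q))) mod 3" .
    also have "\<dots> = (j + (2 * l + q)) mod 3" by presburger
    finally show ?thesis using \<open>odd k\<close> \<open>odd p\<close> e by (simp add: mod_simps)
  qed
  show ?thesis using c1 c2 by simp
qed

lemma C_group: "group C3_rtimes_C8"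
proof (rule groupI)
  fix x y assume "x \<in> carrier C3_rtimes_C8" "y \<in> carrier C3_rtimes_C8"
  thus "x \<otimes>\<^bsub>C3_rtimes_C8\<^esub> y \<in> carrier C3_rtimes_C8"
    unfolding C3_rtimes_C8_def by (auto split: prod.splits)
next
  show "\<one>\<^bsub>C3_rtimes_C8\<^esub> \<in> carrier C3_rtimes_C8" unfolding C3_rtimes_C8_def by auto
next
  fix x y z assume xyz: "x \<in> carrier C3_rtimes_C8" "y \<in> carrier C3_rtimes_C8" "z \<in> carrier C3_rtimes_C8"
  obtain i j k l p q where v: "x = (i,j)" "y = (k,l)" "z = (p,q)" "k < 8" "p < 8"
    using xyz unfolding C3_rtimes_C8_def by auto
  show "x \<otimes>\<^bsub>C3_rtimes_C8\<^esub> y \<otimes>\<^bsub>C3_rtimes_C8\<^esub> z = x \<otimes>\<^bsub>C3_rtimes_C8\<^esub> (y \<otimes>\<^bsub>C3_rtimes_C8\<^esub> z)"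
    unfolding v(1-3) C3_rtimes_C8_def monoid.select_convs by (rule C_assoc_aux[OF v(4,5)])
next
  fix x assume "x \<in> carrier C3_rtimes_C8"
  thus "\<one>\<^bsub>C3_rtimes_C8\<^esub> \<otimes>\<^bsub>C3_rtimes_C8\<^esub> x = x" unfolding C3_rtimes_C8_def by auto
next
  fix x assume x: "x \<in> carrier C3_rtimes_C8"
  then obtain i j where v: "x = (i,j)" "i < 8" "j < 3" unfolding C3_rtimes_C8_def by auto
  define y where "y = ((8 - i) mod 8, if even i then (3 - j) mod 3 else j)"
  have "y \<in> carrier C3_rtimes_C8" unfolding y_def C3_rtimes_C8_def using v by auto
  moreover have "y \<otimes>\<^bsub>C3_rtimes_C8\<^esub> x = \<one>\<^bsub>C3_rtimes_C8\<^esub>"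
  proof (cases "even i")
    case True
    have "(8 - i + i) mod 8 = 0" "((3 - j) mod 3 + j) mod 3 = 0" using v by (simp_all add: mod_simps)
    thus ?thesis unfolding y_def C3_rtimes_C8_def v using True v by (simp add: mod_simps)
  next
    case False
    have "(8 - i + i) mod 8 = 0" "(2 * j + j) mod 3 = 0" using v by simp_all
    thus ?thesis unfolding y_def C3_rtimes_C8_def v using False v by (simp add: mod_simps)
  qed
  ultimately show "\<exists>y\<in>carrier C3_rtimes_C8. y \<otimes>\<^bsub>C3_rtimes_C8\<^esub> x = \<one>\<^bsub>C3_rtimes_C8\<^esub>" by blast
qed

definition LD :: "(nat \<times> nat) list" where
  "LD = [(0,0),(0,1),(1,0),(1,1),(2,0),(2,1),(3,0),(3,1)]"

lemma D8_carrier: "carrier D8 = set LD"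
proof -
  have "{0..<4::nat} = {0,1,2,3}" "{0..<2::nat} = {0,1}" by auto
  thus ?thesis unfolding D8_def LD_def by auto
qed

lemma D8_group: "group D8"
proof -
  have cl: "\<forall>x\<in>set LD. \<forall>y\<in>set LD. x \<otimes>\<^bsub>D8\<^esub> y \<in> set LD"
    unfolding LD_def D8_def by code_simp
  have as: "\<forall>x\<in>set LD. \<forall>y\<in>set LD. \<forall>z\<in>set LD.
     x \<otimes>\<^bsub>D8\<^esub> y \<otimes>\<^bsub>D8\<^esub> z = x \<otimes>\<^bsub>D8\<^esub> (y \<otimes>\<^bsub>D8\<^esub> z)"
    unfolding LD_def D8_def by code_simp
  have on: "\<one>\<^bsub>D8\<^esub> \<in> set LD \<and> (\<forall>x\<in>set LD. \<one>\<^bsub>D8\<^esub> \<otimes>\<^bsub>D8\<^esub> x = x)"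
    unfolding LD_def D8_def by code_simp
  have iv: "\<forall>x\<in>set LD. \<exists>y\<in>set LD. y \<otimes>\<^bsub>D8\<^esub> x = \<one>\<^bsub>D8\<^esub>"
    unfolding LD_def D8_def by code_simp
  show ?thesis
    by (rule groupI) (use cl as on iv D8_carrier in auto)
qed

definition LZ :: "(int \<times> (nat \<times> nat)) list" where
  "LZ = [(0, (0, 0)), (0, (0, 1)), (0, (1, 0)), (0, (3, 0)), (1, (0, 1)), (1, (1, 0)), (1, (1, 1)), (1, (2, 0)), (1, (3, 0)), (1, (3, 1)), (2, (0, 0)), (2, (0, 1)), (2, (1, 0)), (2, (2, 0)), (2, (2, 1)), (2, (3, 0)), (2, (3, 1)), (0, (2, 1)), (1, (0, 0)), (0, (2, 0)), (1, (2, 1)), (2, (1, 1)), (0, (1, 1)), (0, (3, 1))]"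

lemma Z_carrier: "carrier Z3_times_D8 = set LZ"
proof -
  have a: "{0..<3::int} = set [0,1,2]" by auto
  have b: "set [0,1,2::int] \<times> set LD = set LZ" unfolding LD_def LZ_def by code_simp
  show ?thesis unfolding Z3_times_D8_def carrier_DirProd D8_carrier carrier_integer_mod_group
    using a b by simp
qed

lemma Z_group: "group Z3_times_D8"
  unfolding Z3_times_D8_def by (rule DirProd_group[OF group_integer_mod_group D8_group])

lemma Z_twelve: "\<forall>g\<in>set LZ. g \<noteq> \<one>\<^bsub>Z3_times_D8\<^esub> \<longrightarrow>
                   length (filter (\<lambda>a. bk (idx (g \<otimes>\<^bsub>Z3_times_D8\<^esub> a) LZ) = bk (idx a LZ)) LZ) = 12"
  unfolding LZ_def Z3_times_D8_def D8_def integer_mod_group_def DirProd_def bk_def by code_simp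

definition mk :: "nat \<times> nat \<times> nat \<times> nat \<Rightarrow> 3^2^2" where
  "mk t = (case t of (a,b,c,d) \<Rightarrow> \<chi> i j. if i = 1 then (if j = 1 then of_nat a else of_nat b)
                                      else (if j = 1 then of_nat c else of_nat d))"

definition mulT :: "nat \<times> nat \<times> nat \<times> nat \<Rightarrow> nat \<times> nat \<times> nat \<times> nat \<Rightarrow> nat \<times> nat \<times> nat \<times> nat" where
  "mulT t s = (case t of (a,b,c,d) \<Rightarrow> case s of (e,f,g,h) \<Rightarrow>
      ((a*e+b*g) mod 3, (a*f+b*h) mod 3, (c*e+d*g) mod 3, (c*f+d*h) mod 3))"

definition ok :: "nat \<times> nat \<times> nat \<times> nat \<Rightarrow> bool" where
  "ok t = (case t of (a,b,c,d) \<Rightarrow> a < 3 \<and> b < 3 \<and> c < 3 \<and> d < 3)"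

definition detok :: "nat \<times> nat \<times> nat \<times> nat \<Rightarrow> bool" where
  "detok t = (case t of (a,b,c,d) \<Rightarrow> a * d mod 3 = (1 + b * c) mod 3)"

definition LT :: "(nat \<times> nat \<times> nat \<times> nat) list" where
  "LT = [(0, 1, 2, 0), (0, 1, 2, 1), (0, 2, 1, 0), (0, 2, 1, 1), (1, 0, 1, 1), (1, 1, 0, 1), (1, 1, 1, 2), (1, 1, 2, 0), (1, 2, 1, 0), (2, 0, 0, 2), (2, 0, 1, 2), (2, 0, 2, 2), (2, 1, 0, 2), (2, 1, 2, 0), (2, 2, 0, 2), (2, 2, 1, 0), (2, 2, 2, 1), (0, 1, 2, 2), (1, 0, 2, 1), (0, 2, 1, 2), (1, 2, 0, 1), (1, 0, 0, 1), (1, 2, 2, 2), (2, 1, 1, 1)]"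

definition LA :: "(nat \<times> nat \<times> nat \<times> nat) list" where
  "LA = List.product [0..<3] (List.product [0..<3] (List.product [0..<3] [0..<3]))"

lemma of3_mod: "(of_nat (x mod 3) :: 3) = of_nat x"
proof -
  have "(of_nat x :: 3) = of_nat (x mod 3 + 3 * (x div 3))" by simp
  also have "\<dots> = of_nat (x mod 3) + 3 * of_nat (x div 3)" by (simp only: of_nat_add of_nat_mult of_nat_numeral)
  also have "(3::3) = 0" by simp
  finally show ?thesis by simp
qed

lemma of3_eq: "(of_nat x :: 3) = of_nat y \<longleftrightarrow> x mod 3 = y mod 3"
proof
  assume h: "(of_nat x :: 3) = of_nat y"
  hence h': "(of_nat (x mod 3) :: 3) = of_nat (y mod 3)" by (simp add: of3_mod)
  have "x mod 3 < 3" "y mod 3 < 3" by simp_all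
  moreover have "\<And>u v::nat. u < 3 \<Longrightarrow> v < 3 \<Longrightarrow> (of_nat u :: 3) = of_nat v \<Longrightarrow> u = v"
  proof -
    fix u v :: nat assume "u < 3" "v < 3" "(of_nat u :: 3) = of_nat v"
    thus "u = v" by (auto simp: less_Suc_eq numeral_3_eq_3)
  qed
  ultimately show "x mod 3 = y mod 3" using h' by blast
next
  assume "x mod 3 = y mod 3"
  thus "(of_nat x :: 3) = of_nat y" by (metis of3_mod)
qed

lemma mk_nth: "mk (a,b,c,d) $ 1 $ 1 = of_nat a" "mk (a,b,c,d) $ 1 $ 2 = of_nat b"
  "mk (a,b,c,d) $ 2 $ 1 = of_nat c" "mk (a,b,c,d) $ 2 $ 2 = of_nat d"
  unfolding mk_def by simp_all

lemma mk_mult: "mk t ** mk s = mk (mulT t s)"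
proof -
  obtain a b c d where t: "t = (a,b,c,d)" by (cases t) auto
  obtain e f g h where s: "s = (e,f,g,h)" by (cases s) auto
  show ?thesis unfolding t s mulT_def
    by (simp add: vec_eq_iff forall_2 matrix_matrix_mult_def sum_2 mk_nth of3_mod)
qed

lemma mk_eq: "ok t \<Longrightarrow> ok s \<Longrightarrow> mk t = mk s \<longleftrightarrow> t = s"
proof -
  assume "ok t" "ok s"
  obtain a b c d where t: "t = (a,b,c,d)" by (cases t) auto
  obtain e f g h where s: "s = (e,f,g,h)" by (cases s) auto
  have "mk t = mk s \<longleftrightarrow> (of_nat a :: 3) = of_nat e \<and> (of_nat b :: 3) = of_nat f \<and>
       (of_nat c :: 3) = of_nat g \<and> (of_nat d :: 3) = of_nat h"
    unfolding t s by (simp add: vec_eq_iff forall_2 mk_nth)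
  also have "\<dots> \<longleftrightarrow> t = s" using \<open>ok t\<close> \<open>ok s\<close> unfolding t s ok_def by (simp add: of3_eq)
  finally show ?thesis .
qed

lemma of3_surj: "\<exists>n<3. (x::3) = of_nat n"
proof -
  have "x = 1 \<or> x = 2 \<or> x = 3" by (rule exhaust_3)
  thus ?thesis
  proof (elim disjE)
    assume "x = 1" thus ?thesis by (intro exI[of _ 1]) simp
  next
    assume "x = 2" thus ?thesis by (intro exI[of _ 2]) simp
  next
    assume "x = 3" thus ?thesis by (intro exI[of _ 0]) simp
  qed
qed

lemma mk_surj: "\<exists>t. ok t \<and> A = mk t"
proof -
  obtain a where a: "a < 3" "A $ 1 $ 1 = of_nat a" using of3_surj by blast
  obtain b where b: "b < 3" "A $ 1 $ 2 = of_nat b" using of3_surj by blast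
  obtain c where c: "c < 3" "A $ 2 $ 1 = of_nat c" using of3_surj by blast
  obtain d where d: "d < 3" "A $ 2 $ 2 = of_nat d" using of3_surj by blast
  have "A = mk (a,b,c,d)" using a b c d by (simp add: vec_eq_iff forall_2 mk_nth)
  thus ?thesis using a b c d unfolding ok_def by auto
qed

lemma det_mk: "det (mk t) = 1 \<longleftrightarrow> detok t"
proof -
  obtain a b c d where t: "t = (a,b,c,d)" by (cases t) auto
  have "det (mk t) = of_nat (a * d) - of_nat (b * c)" unfolding t by (simp add: det_2 mk_nth)
  hence "det (mk t) = 1 \<longleftrightarrow> (of_nat (a * d) :: 3) = of_nat (1 + b * c)"
    by (auto simp: algebra_simps)
  thus ?thesis unfolding t detok_def using of3_eq[of "a * d" "1 + b * c"] by simp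
qed

lemma okLA: "ok t \<Longrightarrow> t \<in> set LA"
  unfolding ok_def LA_def by (cases t) (simp del: product.simps)

lemma SL_carrier: "carrier SL23 = set (map mk LT)"
proof -
  have c1: "\<forall>t\<in>set LA. detok t \<longrightarrow> t \<in> set LT" unfolding LA_def LT_def detok_def by code_simp
  have c2: "\<forall>t\<in>set LT. detok t" unfolding LT_def detok_def by code_simp
  show ?thesis
  proof (rule Set.set_eqI, rule iffI)
    fix A assume "A \<in> carrier SL23"
    hence dA: "det A = 1" unfolding SL23_def by simp
    obtain t where t: "ok t" "A = mk t" using mk_surj by blast
    have "detok t" using dA t det_mk by simp
    hence "t \<in> set LT" using c1 okLA[OF t(1)] by blast
    thus "A \<in> set (map mk LT)" using t by simp
  next
    fix A assume "A \<in> set (map mk LT)"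
    then obtain t where "t \<in> set LT" "A = mk t" by auto
    thus "A \<in> carrier SL23" using c2 det_mk unfolding SL23_def by simp
  qed
qed

lemma mat1_mk: "mat 1 = mk (1,0,0,1)"
  by (simp add: vec_eq_iff forall_2 mk_nth mat_def)

lemma SL_group: "group SL23"
proof (rule groupI)
  fix x y assume "x \<in> carrier SL23" "y \<in> carrier SL23"
  thus "x \<otimes>\<^bsub>SL23\<^esub> y \<in> carrier SL23" unfolding SL23_def by (simp add: det_mul)
next
  show "\<one>\<^bsub>SL23\<^esub> \<in> carrier SL23" unfolding SL23_def by (simp add: det_I)
next
  fix x y z
  show "x \<otimes>\<^bsub>SL23\<^esub> y \<otimes>\<^bsub>SL23\<^esub> z = x \<otimes>\<^bsub>SL23\<^esub> (y \<otimes>\<^bsub>SL23\<^esub> z)"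
    unfolding SL23_def by (simp add: matrix_mul_assoc)
next
  fix x show "\<one>\<^bsub>SL23\<^esub> \<otimes>\<^bsub>SL23\<^esub> x = x" unfolding SL23_def by (simp add: matrix_mul_lid)
next
  fix x assume "x \<in> carrier SL23"
  then obtain t where t: "t \<in> set LT" "x = mk t" unfolding SL_carrier by auto
  have iv: "\<forall>t\<in>set LT. \<exists>s\<in>set LT. mulT s t = (1,0,0,1)" unfolding LT_def mulT_def by code_simp
  then obtain s where s: "s \<in> set LT" "mulT s t = (1,0,0,1)" using t(1) by blast
  have "mk s \<in> carrier SL23" using s(1) unfolding SL_carrier by simp
  moreover have "mk s \<otimes>\<^bsub>SL23\<^esub> x = \<one>\<^bsub>SL23\<^esub>"
    unfolding SL23_def using t s by (simp add: mk_mult mat1_mk)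
  ultimately show "\<exists>y\<in>carrier SL23. y \<otimes>\<^bsub>SL23\<^esub> x = \<one>\<^bsub>SL23\<^esub>" by blast
qed

lemma idx_map_inj: "inj_on f (insert x (set L)) \<Longrightarrow> idx (f x) (map f L) = idx x L"
  by (induction L) (auto simp: inj_on_def)

lemma SL_twelve: "\<forall>g\<in>set (map mk LT). g \<noteq> \<one>\<^bsub>SL23\<^esub> \<longrightarrow>
   length (filter (\<lambda>a. bk (idx (g \<otimes>\<^bsub>SL23\<^esub> a) (map mk LT)) = bk (idx a (map mk LT))) (map mk LT)) = 12"
proof -
  have okLT: "\<forall>t\<in>set LT. ok t" unfolding LT_def ok_def by code_simp
  have okmul: "ok (mulT t s)" for t s unfolding ok_def mulT_def by (auto split: prod.splits)
  have inj: "inj_on mk (insert u (set LT))" if "ok u" for u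
    using okLT that mk_eq unfolding inj_on_def by blast
  have core: "\<forall>t\<in>set LT. t \<noteq> (1,0,0,1) \<longrightarrow>
     length (filter (\<lambda>s. bk (idx (mulT t s) LT) = bk (idx s LT)) LT) = 12"
    unfolding LT_def mulT_def bk_def by code_simp
  show ?thesis
  proof (intro ballI impI)
    fix g assume g: "g \<in> set (map mk LT)" "g \<noteq> \<one>\<^bsub>SL23\<^esub>"
    then obtain t where t: "t \<in> set LT" "g = mk t" by auto
    have tn: "t \<noteq> (1,0,0,1)" using g(2) t unfolding SL23_def by (auto simp: mat1_mk)
    have "filter (\<lambda>a. bk (idx (g \<otimes>\<^bsub>SL23\<^esub> a) (map mk LT)) = bk (idx a (map mk LT))) (map mk LT)
        = map mk (filter (\<lambda>s. bk (idx (mulT t s) LT) = bk (idx s LT)) LT)"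
    proof -
      have "(\<lambda>s. bk (idx (g \<otimes>\<^bsub>SL23\<^esub> mk s) (map mk LT)) = bk (idx (mk s) (map mk LT))) s
          = (\<lambda>s. bk (idx (mulT t s) LT) = bk (idx s LT)) s" if s: "s \<in> set LT" for s
      proof -
        have "g \<otimes>\<^bsub>SL23\<^esub> mk s = mk (mulT t s)" unfolding SL23_def t(2) by (simp add: mk_mult)
        moreover have "idx (mk (mulT t s)) (map mk LT) = idx (mulT t s) LT"
          by (rule idx_map_inj[OF inj[OF okmul]])
        moreover have "idx (mk s) (map mk LT) = idx s LT"
          by (rule idx_map_inj[OF inj]) (use okLT s in blast)
        ultimately show ?thesis by simp
      qed
      hence "filter ((\<lambda>a. bk (idx (g \<otimes>\<^bsub>SL23\<^esub> a) (map mk LT)) = bk (idx a (map mk LT))) \<circ> mk) LT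
          = filter (\<lambda>s. bk (idx (mulT t s) LT) = bk (idx s LT)) LT"
        by (intro filter_cong) auto
      thus ?thesis by (simp add: filter_map)
    qed
    thus "length (filter (\<lambda>a. bk (idx (g \<otimes>\<^bsub>SL23\<^esub> a) (map mk LT)) = bk (idx a (map mk LT))) (map mk LT)) = 12"
      using core t(1) tn by simp
  qed
qed

lemma LC_facts: "distinct LC" "length LC = 24" unfolding LC_def by code_simp+

lemma LZ_facts: "distinct LZ" "length LZ = 24" unfolding LZ_def by code_simp+

lemma LT_facts: "distinct (map mk LT)" "length (map mk LT) = 24"
proof -
  have okLT: "\<forall>t\<in>set LT. ok t" unfolding LT_def ok_def by code_simp
  have "inj_on mk (set LT)" using okLT mk_eq unfolding inj_on_def by blast
  moreover have "distinct LT" unfolding LT_def by code_simp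
  ultimately show "distinct (map mk LT)" by (simp add: distinct_map)
  show "length (map mk LT) = 24" unfolding LT_def by simp
qed

theorem corollary7p2:
  fixes n :: nat and Fld :: "nat \<Rightarrow> 'b ring"
  assumes "n > 0"
    and "\<forall>q \<in> components (2 * n + 1). q > 34"
    and "is_field_family (2 * n + 1) Fld"
  shows "has_PDF (C3_rtimes_C8 \<times>\<times> addF (2 * n + 1) Fld) (48 * n + 24) (blocksizes n) 24
       \<and> has_PDF (SL23 \<times>\<times> addF (2 * n + 1) Fld) (48 * n + 24) (blocksizes n) 24
       \<and> has_PDF (Z3_times_D8 \<times>\<times> addF (2 * n + 1) Fld) (48 * n + 24) (blocksizes n) 24"
proof (intro conjI)
  show "has_PDF (C3_rtimes_C8 \<times>\<times> addF (2 * n + 1) Fld) (48 * n + 24) (blocksizes n) 24"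
    by (rule list_PDF[OF C_group C_carrier LC_facts assms(2,3) C_twelve])
  show "has_PDF (SL23 \<times>\<times> addF (2 * n + 1) Fld) (48 * n + 24) (blocksizes n) 24"
    by (rule list_PDF[OF SL_group SL_carrier LT_facts assms(2,3) SL_twelve])
  show "has_PDF (Z3_times_D8 \<times>\<times> addF (2 * n + 1) Fld) (48 * n + 24) (blocksizes n) 24"
    by (rule list_PDF[OF Z_group Z_carrier LZ_facts assms(2,3) Z_twelve])
qed

end
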